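(* For every $p,q,r\in(0,\infty)$ and $\Phi,K\ge1$ there exist constants $C=C(p,q,r,\Phi,K)$ and $c=c(p,q,r,\Phi,K)$ such that the following holds. Let $X$ be a finite set, $\mu,\nu$ outer measures, $\omega$ a measure, and $\mathcal C$ a $\mu$-covering function such that $(X,\mu,\nu,\mathcal C)$ satisfies the canopy condition with parameters $\Phi,K$. For every $f\in L^p_\mu(\ell^q_\nu(\ell^r_\omega))$ on $X$ there exists a collection $\{E_k:k\in\mathbb Z\}$ of pairwise disjoint subsets of $X$ such that, setting $F_k=\mathbf B_{\mathcal C}(\bigcup_{l\ge k}E_l)$, for every $k\in\mathbb Z$: (a) if $E_k\ne\varnothing$, then $\ell^q_\nu(\ell^r_\omega)(f1_{X\setminus F_{k+1}})(E_k)>c2^k$; (b) $\|f1_{X\setminus F_k}\|_{L^\infty_\mu(\ell^q_\nu(\ell^r_\omega))}\le2^k$; (c) $\mu(\ell^q_\nu(\ell^r_\omega)(f)>2^k)\le\mu(F_k)$; (d) $\mu(E_k)\le C\mu(\ell^q_\nu(\ell^r_\omega)(f)>c2^k)$. In particular, there is a constant $C'=C'(p,q,r,\Phi,K)$ with $$C'^{-1}\|f\|^p_{L^p_\mu(\ell^q_\nu(\ell^r_\omega))}\le\sum_{k\in\mathbb Z}2^{kp}\mu(E_k)\le C'\|f\|^p_{L^p_\mu(\ell^q_\nu(\ell^r_\omega))}$$ and the same two-sided bound holds with $\sum_{k}2^{kp}\mu(E_k)$ replaced by $\sum_{k\in\mathbb Z}2^{kp}\sum_{l\ge k}\mu(E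_l)$.
   Context: An outer measure on $X$ is a monotone, subadditive function $\mathcal P(X)\to[0,\infty]$ vanishing on $\varnothing$; standing assumption: outer measures are finite and strictly positive on nonempty subsets; $\omega$ is given by a finite strictly positive weight. Quasi-norms: for nonempty $A$, $\ell^r_\omega(f)(A)=\nu(A)^{-1/r}\|f1_A\|_{L^r(X,\omega)}$; $\|f\|_{L^\infty_\nu(\ell^r_\omega)}=\sup_{\varnothing\ne A}\ell^r_\omega(f)(A)$; $\nu(\ell^r_\omega(f)>\lambda)=\inf\{\nu(B):\|f1_{X\setminus B}\|_{L^\infty_\nu(\ell^r_\omega)}\le\lambda\}$; $\|f\|_{L^q_\nu(\ell^r_\omega)}=(\int_0^\infty q\lambda^{q-1}\nu(\ell^r_\omega(f)>\lambda)d\lambda)^{1/q}$; $\ell^q_\nu(\ell^r_\omega)(f)(A)=\mu(A)^{-1/q}\|f1_A\|_{L^q_\nu(\ell^r_\omega)}$; $\|f\|_{L^\infty_\mu(\ell^q_\nu(\ell^r_\omega))}=\sup_{\varnothing\ne A}\ell^q_\nu(\ell^r_\omega)(f)(A)$; $\mu(\ell^q_\nu(\ell^r_\omega)(f)>\lambda)=\inf\{\mu(B):\|f1_{X\setminus B}\|_{L^\infty_\mu(\ell^q_\nu(\ell^r_\omega))}\le\lambda\}$; $\|f\|_{L^p_\mu(\ell^q_\nu(\ell^r_\omega))}=(\int_0^\infty p\lambda^{p-1}\mu(\ell^q_\nu(\ell^r_\omega)(f)>\lambda)d\lambda)^{1/p}$. A $\mu$-covering function with parameter $\Phi$ is, for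 a collection $\mathcal E$ of subsets of $X$, a map $\mathcal C$ assigning to each $A\subseteq X$ a subcollection $\mathcal C(A)\subseteq\mathcal E$ of pairwise disjoint sets such that $\mathbf B_{\mathcal C}(A)=\bigcup_{E\in\mathcal C(A)}E$ satisfies $A\subseteq\mathbf B_{\mathcal C}(A)$, $\mu(\mathbf B_{\mathcal C}(A))\le\Phi\mu(A)$, and is monotone in $A$. A collection $\mathcal A$ of pairwise disjoint subsets is $\nu$-Carathéodory (parameter $K$) if $\sum_{A\in\mathcal A}\nu(U\cap A)\le K\nu(U\cap\bigcup\mathcal A)$ for all $U\subseteq X$. Canopy condition (parameters $\Phi,K$): $\mathcal C$ is a $\mu$-covering function with parameter $\Phi$, and for every $\nu$-Carathéodory collection $\mathcal A$ (parameter $K$) and every $D\subseteq X$ disjoint from $\mathbf B_{\mathcal C}(\bigcup_{A\in\mathcal A}A)$, the collection $\mathcal A\cup\{D\}$ is $\nu$-Carathéodory (parameter $K$). *)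

theory Defs
  imports "HOL-Analysis.Analysis"
begin

definition restr :: "'a set \<Rightarrow> ('a \<Rightarrow> complex) \<Rightarrow> 'a \<Rightarrow> complex" where
  "restr A f = (\<lambda>x. if x \<in> A then f x else 0)"

definition outer_measure :: "'a set \<Rightarrow> ('a set \<Rightarrow> real) \<Rightarrow> bool" where
  "outer_measure X m \<longleftrightarrow>
     m {} = 0
   \<and> (\<forall>A B. A \<subseteq> B \<and> B \<subseteq> X \<longrightarrow> m A \<le> m B)
   \<and> (\<forall>A B. A \<subseteq> X \<and> B \<subseteq> X \<longrightarrow> m (A \<union> B) \<le> m A + m B)
   \<and> (\<forall>A. A \<subseteq> X \<and> A \<noteq> {} \<longrightarrow> 0 < m A)"

text \<open>The L^r(X,omega) norm for the weight w.\<close>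
definition Lr_norm :: "'a set \<Rightarrow> ('a \<Rightarrow> real) \<Rightarrow> real \<Rightarrow> ('a \<Rightarrow> complex) \<Rightarrow> real" where
  "Lr_norm X w r f = (\<Sum>x\<in>X. w x * cmod (f x) powr r) powr (1 / r)"

definition loc_size :: "('a set \<Rightarrow> real) \<Rightarrow> real \<Rightarrow> (('a \<Rightarrow> complex) \<Rightarrow> real)
    \<Rightarrow> ('a \<Rightarrow> complex) \<Rightarrow> 'a set \<Rightarrow> real" where
  "loc_size m t S f A = m A powr (- 1 / t) * S (restr A f)"

definition Linf_norm :: "'a set \<Rightarrow> ('a set \<Rightarrow> real) \<Rightarrow> real \<Rightarrow> (('a \<Rightarrow> complex) \<Rightarrow> real)
    \<Rightarrow> ('a \<Rightarrow> complex) \<Rightarrow> real" where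
  "Linf_norm X m t S f = Sup (insert 0 (loc_size m t S f ` {A. A \<subseteq> X \<and> A \<noteq> {}}))"

text \<open>Super level measure m(size(f) > lambda).\<close>
definition super_level :: "'a set \<Rightarrow> ('a set \<Rightarrow> real) \<Rightarrow> real \<Rightarrow> (('a \<Rightarrow> complex) \<Rightarrow> real)
    \<Rightarrow> ('a \<Rightarrow> complex) \<Rightarrow> real \<Rightarrow> real" where
  "super_level X m t S f lam =
     Inf {m B | B. B \<subseteq> X \<and> Linf_norm X m t S (restr (X - B) f) \<le> lam}"

definition Lout_norm :: "'a set \<Rightarrow> ('a set \<Rightarrow> real) \<Rightarrow> real \<Rightarrow> real \<Rightarrow> (('a \<Rightarrow> complex) \<Rightarrow> real)
    \<Rightarrow> ('a \<Rightarrow> complex) \<Rightarrow> real" where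
  "Lout_norm X m t s S f =
     (set_lebesgue_integral lborel {0<..}
        (\<lambda>lam. s * lam powr (s - 1) * super_level X m t S f lam)) powr (1 / s)"

definition cover_union :: "('a set \<Rightarrow> 'a set set) \<Rightarrow> 'a set \<Rightarrow> 'a set" where
  "cover_union C A = \<Union> (C A)"

definition covering_function :: "'a set \<Rightarrow> ('a set \<Rightarrow> real) \<Rightarrow> real \<Rightarrow> 'a set set
    \<Rightarrow> ('a set \<Rightarrow> 'a set set) \<Rightarrow> bool" where
  "covering_function X m \<Phi> \<E> C \<longleftrightarrow>
     \<E> \<subseteq> Pow X
   \<and> (\<forall>A. A \<subseteq> X \<longrightarrow> C A \<subseteq> \<E> \<and> pairwise disjnt (C A)
          \<and> A \<subseteq> cover_union C A \<and> m (cover_union C A) \<le> \<Phi> * m A)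
   \<and> (\<forall>A A'. A \<subseteq> A' \<and> A' \<subseteq> X \<longrightarrow> cover_union C A \<subseteq> cover_union C A')"

definition caratheodory :: "'a set \<Rightarrow> ('a set \<Rightarrow> real) \<Rightarrow> real \<Rightarrow> 'a set set \<Rightarrow> bool" where
  "caratheodory X m K \<A> \<longleftrightarrow>
     \<A> \<subseteq> Pow X \<and> pairwise disjnt \<A>
   \<and> (\<forall>U. U \<subseteq> X \<longrightarrow> (\<Sum>A\<in>\<A>. m (U \<inter> A)) \<le> K * m (U \<inter> \<Union>\<A>))"

definition canopy :: "'a set \<Rightarrow> ('a set \<Rightarrow> real) \<Rightarrow> ('a set \<Rightarrow> real) \<Rightarrow> real \<Rightarrow> real
    \<Rightarrow> 'a set set \<Rightarrow> ('a set \<Rightarrow> 'a set set) \<Rightarrow> bool" where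
  "canopy X \<mu> \<nu> \<Phi> K \<E> C \<longleftrightarrow>
     covering_function X \<mu> \<Phi> \<E> C
   \<and> (\<forall>\<A> D. caratheodory X \<nu> K \<A> \<and> D \<subseteq> X \<and> D \<inter> cover_union C (\<Union>\<A>) = {}
          \<longrightarrow> caratheodory X \<nu> K (insert D \<A>))"

end

theory Submission
  imports Defs
begin

definition Wint :: "real \<Rightarrow> (real \<Rightarrow> real) \<Rightarrow> bool" where
  "Wint s \<phi> \<longleftrightarrow> set_integrable lborel {0<..} (\<lambda>x. s * x powr (s - 1) * \<phi> x)"

definition Wi :: "real \<Rightarrow> (real \<Rightarrow> real) \<Rightarrow> real" where
  "Wi s \<phi> = set_lebesgue_integral lborel {0<..} (\<lambda>x. s * x powr (s - 1) * \<phi> x)"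

definition nice_fn :: "(real \<Rightarrow> real) \<Rightarrow> bool" where
  "nice_fn \<phi> \<longleftrightarrow> (\<exists>M T. 0 < T \<and> (\<forall>x>0. 0 \<le> \<phi> x \<and> \<phi> x \<le> M)
      \<and> (\<forall>x y. 0 < x \<longrightarrow> x \<le> y \<longrightarrow> \<phi> y \<le> \<phi> x) \<and> (\<forall>x\<ge>T. \<phi> x = 0))"

lemma powr_FTC:
  fixes a b s :: real
  assumes "0 \<le> a" "a < b" "0 < s"
  shows "set_integrable lborel {a<..<b} (\<lambda>x. s * x powr (s - 1))"
    "set_lebesgue_integral lborel {a<..<b} (\<lambda>x. s * x powr (s - 1)) = b powr s - a powr s"
proof -
  have lim_a: "((\<lambda>x. x powr s) \<longlongrightarrow> a powr s) (at_right a)"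
  proof (cases "a = 0")
    case True
    have "((\<lambda>x. x powr s) \<longlongrightarrow> 0) (at_right 0)"
      by (rule tendsto_zero_powrI) (auto simp: assms eventually_at_right_less eventually_at_filter)
    then show ?thesis using True assms by simp
  next
    case False
    then show ?thesis using assms by (auto intro!: tendsto_eq_intros)
  qed
  have lim_b: "((\<lambda>x. x powr s) \<longlongrightarrow> b powr s) (at_left b)"
    using assms by (auto intro!: tendsto_eq_intros)
  note F = interval_integral_FTC_nonneg[of "ereal a" "ereal b" "\<lambda>x. x powr s"
      "\<lambda>x. s * x powr (s - 1)" "a powr s" "b powr s"]
  have d: "DERIV (\<lambda>x. x powr s) x :> s * x powr (s - 1)" if "a < x" for x
    using that assms by (auto intro!: derivative_eq_intros)
  have c: "isCont (\<lambda>x. s * x powr (s - 1)) x" if "a < x" for x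
    using that assms by (auto intro!: continuous_intros)
  have nn: "AE x in lborel. ereal a < ereal x \<longrightarrow> ereal x < ereal b \<longrightarrow> 0 \<le> s * x powr (s - 1)"
    using assms by auto
  have r: "set_integrable lborel (einterval (ereal a) (ereal b)) (\<lambda>x. s * x powr (s - 1))"
     "(LBINT x=ereal a..ereal b. s * x powr (s - 1)) = b powr s - a powr s"
    using F[OF _ d c nn] assms lim_a lim_b by (auto simp: ereal_tendsto_simps)
  show "set_integrable lborel {a<..<b} (\<lambda>x. s * x powr (s - 1))" using r by simp
  show "set_lebesgue_integral lborel {a<..<b} (\<lambda>x. s * x powr (s - 1)) = b powr s - a powr s"
    using r assms by (simp add: interval_lebesgue_integral_def)
qed

lemma Wint_Wi_cong:
  assumes "\<And>x. 0 < x \<Longrightarrow> \<phi> x = \<psi> x"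
  shows "Wint s \<phi> = Wint s \<psi>" "Wi s \<phi> = Wi s \<psi>"
  unfolding Wint_def Wi_def
   by (intro set_integrable_cong set_lebesgue_integral_cong refl; simp add: assms)+

lemma Wint_add: "Wint s \<phi> \<Longrightarrow> Wint s \<psi> \<Longrightarrow> Wint s (\<lambda>x. \<phi> x + \<psi> x)"
  and Wi_add: "Wint s \<phi> \<Longrightarrow> Wint s \<psi> \<Longrightarrow> Wi s (\<lambda>x. \<phi> x + \<psi> x) = Wi s \<phi> + Wi s \<psi>"
proof -
  assume a: "Wint s \<phi>" "Wint s \<psi>"
  have e: "(\<lambda>x. s * x powr (s - 1) * (\<phi> x + \<psi> x)) = (\<lambda>x. s * x powr (s - 1) * \<phi> x + s * x powr (s - 1) * \<psi> x)"
    by (auto simp: algebra_simps)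
  show "Wint s (\<lambda>x. \<phi> x + \<psi> x)" using a unfolding Wint_def e by (rule set_integral_add)
  show "Wi s (\<lambda>x. \<phi> x + \<psi> x) = Wi s \<phi> + Wi s \<psi>" using a unfolding Wint_def Wi_def e by (rule set_integral_add)
qed

lemma Wint_cmult: "Wint s \<phi> \<Longrightarrow> Wint s (\<lambda>x. c * \<phi> x)"
  and Wi_cmult: "Wint s \<phi> \<Longrightarrow> Wi s (\<lambda>x. c * \<phi> x) = c * Wi s \<phi>"
proof -
  assume a: "Wint s \<phi>"
  have e: "(\<lambda>x. s * x powr (s - 1) * (c * \<phi> x)) = (\<lambda>x. c * (s * x powr (s - 1) * \<phi> x))"
    by (auto simp: algebra_simps)
  show "Wint s (\<lambda>x. c * \<phi> x)" using a unfolding Wint_def e by simp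
  show "Wi s (\<lambda>x. c * \<phi> x) = c * Wi s \<phi>" using a unfolding Wint_def Wi_def e by simp
qed

lemma Wint_sum: "finite I \<Longrightarrow> (\<And>i. i \<in> I \<Longrightarrow> Wint s (\<phi> i)) \<Longrightarrow> Wint s (\<lambda>x. \<Sum>i\<in>I. \<phi> i x)"
  and Wi_sum: "finite I \<Longrightarrow> (\<And>i. i \<in> I \<Longrightarrow> Wint s (\<phi> i)) \<Longrightarrow> Wi s (\<lambda>x. \<Sum>i\<in>I. \<phi> i x) = (\<Sum>i\<in>I. Wi s (\<phi> i))"
proof -
  assume f: "finite I" and w: "\<And>i. i \<in> I \<Longrightarrow> Wint s (\<phi> i)"
  have "Wint s (\<lambda>x. \<Sum>i\<in>I. \<phi> i x) \<and> Wi s (\<lambda>x. \<Sum>i\<in>I. \<phi> i x) = (\<Sum>i\<in>I. Wi s (\<phi> i))"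
    using f w
  proof (induction I rule: finite_induct)
    case empty
    then show ?case by (simp add: Wint_def Wi_def set_integrable_def)
  next
    case (insert i I)
    then show ?case by (simp add: Wint_add Wi_add)
  qed
  then show "Wint s (\<lambda>x. \<Sum>i\<in>I. \<phi> i x)" "Wi s (\<lambda>x. \<Sum>i\<in>I. \<phi> i x) = (\<Sum>i\<in>I. Wi s (\<phi> i))" by auto
qed

lemma Wi_mono:
  assumes "Wint s \<phi>" "Wint s \<psi>" "0 < s" "\<And>x. 0 < x \<Longrightarrow> \<phi> x \<le> \<psi> x"
  shows "Wi s \<phi> \<le> Wi s \<psi>"
  unfolding Wi_def using assms unfolding Wint_def
  by (intro set_integral_mono) (auto intro!: mult_left_mono)

lemma Wi_nonneg:
  assumes "0 < s" "\<And>x. 0 < x \<Longrightarrow> 0 \<le> \<phi> x"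
  shows "0 \<le> Wi s \<phi>"
  unfolding Wi_def set_lebesgue_integral_def using assms
  by (intro Bochner_Integration.integral_nonneg_AE AE_I2) (auto simp: indicator_def)

lemma Wint_ind:
  assumes "0 \<le> a" "a < b" "0 < s"
  shows "Wint s (indicator {a<..<b})" "Wi s (indicator {a<..<b}) = b powr s - a powr s"
proof -
  have e: "(\<lambda>x. indicator {0<..} x *\<^sub>R (s * x powr (s - 1) * indicator {a<..<b} x))
      = (\<lambda>x. indicator {a<..<b} x *\<^sub>R (s * x powr (s - 1)))"
    using assms by (auto simp: indicator_def fun_eq_iff)
  show "Wint s (indicator {a<..<b})"
    using powr_FTC(1)[OF assms] unfolding Wint_def set_integrable_def e by simp
  show "Wi s (indicator {a<..<b}) = b powr s - a powr s"
    using powr_FTC(2)[OF assms] unfolding Wi_def set_lebesgue_integral_def e by simp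
qed

lemma Wint_nice:
  assumes "0 < s" "nice_fn \<phi>"
  shows "Wint s \<phi>"
proof -
  obtain M T where MT: "0 < T" "\<And>x. 0 < x \<Longrightarrow> 0 \<le> \<phi> x \<and> \<phi> x \<le> M"
    "\<And>x y. 0 < x \<Longrightarrow> x \<le> y \<Longrightarrow> \<phi> y \<le> \<phi> x" "\<And>x. x \<ge> T \<Longrightarrow> \<phi> x = 0"
    using assms(2) unfolding nice_fn_def by blast
  define \<psi> where "\<psi> x = (if 0 < x then \<phi> x else M)" for x
  have "mono (\<lambda>x. - \<psi> x)"
    unfolding mono_def \<psi>_def using MT by (auto simp: not_less)
  then have m\<psi>: "(\<lambda>x. - \<psi> x) \<in> borel_measurable borel" by (rule borel_measurable_mono)
  then have m\<psi>': "\<psi> \<in> borel_measurable borel"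
    using borel_measurable_uminus[OF m\<psi>] by simp
  have cg: "Wint s \<phi> = Wint s \<psi>" by (rule Wint_Wi_cong) (simp add: \<psi>_def)
  have bound: "set_integrable lborel {0<..<T} (\<lambda>x. M * (s * x powr (s - 1)))"
    using powr_FTC(1)[OF order.refl MT(1) assms(1)] by simp
  have "integrable lborel (\<lambda>x. indicator {0<..} x *\<^sub>R (s * x powr (s - 1) * \<psi> x))"
  proof (rule Bochner_Integration.integrable_bound)
    show "integrable lborel (\<lambda>x. indicator {0<..<T} x *\<^sub>R (M * (s * x powr (s - 1))))"
      using bound unfolding set_integrable_def .
    show "(\<lambda>x. indicator {0<..} x *\<^sub>R (s * x powr (s - 1) * \<psi> x)) \<in> borel_measurable lborel"
      using m\<psi>' by measurable
    show "AE x in lborel. norm (indicator {0<..} x *\<^sub>R (s * x powr (s - 1) * \<psi> x))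
        \<le> norm (indicator {0<..<T} x *\<^sub>R (M * (s * x powr (s - 1))))"
    proof (rule AE_I2)
      fix x :: real
      show "norm (indicator {0<..} x *\<^sub>R (s * x powr (s - 1) * \<psi> x))
        \<le> norm (indicator {0<..<T} x *\<^sub>R (M * (s * x powr (s - 1))))"
      proof (cases "0 < x")
        case True
        note x = True
        show ?thesis
        proof (cases "x < T")
          case True
          have "0 \<le> \<phi> x" "\<phi> x \<le> M" using MT(2) x by auto
          then show ?thesis using x True assms(1)
            by (simp add: \<psi>_def abs_mult mult_left_mono mult.commute mult.left_commute)
        next
          case False
          then show ?thesis using x MT(4)[of x] assms(1) by (simp add: \<psi>_def)
        qed
      qed simp
    qed
  qed
  then show ?thesis using cg unfolding Wint_def set_integrable_def by simp
qed

lemma nice_add: "nice_fn \<phi> \<Longrightarrow> nice_fn \<psi> \<Longrightarrow> nice_fn (\<lambda>x. \<phi> x + \<psi> x)"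
proof -
  assume n1: "nice_fn \<phi>" and n2: "nice_fn \<psi>"
  obtain M T where a: "0 < T" "\<forall>x>0. 0 \<le> \<phi> x \<and> \<phi> x \<le> M"
      "\<forall>x y. 0 < x \<longrightarrow> x \<le> y \<longrightarrow> \<phi> y \<le> \<phi> x" "\<forall>x\<ge>T. \<phi> x = 0"
    using n1 unfolding nice_fn_def by metis
  obtain M' T' where b: "0 < T'" "\<forall>x>0. 0 \<le> \<psi> x \<and> \<psi> x \<le> M'"
      "\<forall>x y. 0 < x \<longrightarrow> x \<le> y \<longrightarrow> \<psi> y \<le> \<psi> x" "\<forall>x\<ge>T'. \<psi> x = 0"
    using n2 unfolding nice_fn_def by metis
  show ?thesis unfolding nice_fn_def
    apply (rule exI[of _ "M + M'"], rule exI[of _ "max T T'"])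
    using a b by (auto intro: add_mono)
qed

lemma nice_cmult: "nice_fn \<phi> \<Longrightarrow> 0 \<le> c \<Longrightarrow> nice_fn (\<lambda>x. c * \<phi> x)"
proof -
  assume "nice_fn \<phi>" "0 \<le> c"
  then obtain M T where a: "0 < T" "\<forall>x>0. 0 \<le> \<phi> x \<and> \<phi> x \<le> M"
      "\<forall>x y. 0 < x \<longrightarrow> x \<le> y \<longrightarrow> \<phi> y \<le> \<phi> x" "\<forall>x\<ge>T. \<phi> x = 0"
    unfolding nice_fn_def by metis
  show ?thesis unfolding nice_fn_def
    apply (rule exI[of _ "c * M"], rule exI[of _ T])
    using a \<open>0 \<le> c\<close> by (auto intro: mult_left_mono)
qed

lemma nice_zero: "nice_fn (\<lambda>x. 0)"
  unfolding nice_fn_def by (rule exI[of _ 0], rule exI[of _ 1]) auto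

lemma nice_sum: "finite I \<Longrightarrow> (\<And>i. i \<in> I \<Longrightarrow> nice_fn (\<phi> i)) \<Longrightarrow> nice_fn (\<lambda>x. \<Sum>i\<in>I. \<phi> i x)"
  by (induction I rule: finite_induct) (auto intro: nice_add simp: nice_zero)

lemma nice_scale: "nice_fn \<phi> \<Longrightarrow> 0 < \<sigma> \<Longrightarrow> nice_fn (\<lambda>x. \<phi> (x / \<sigma>))"
proof -
  assume "nice_fn \<phi>" "0 < \<sigma>"
  then obtain M T where a: "0 < T" "\<forall>x>0. 0 \<le> \<phi> x \<and> \<phi> x \<le> M"
      "\<forall>x y. 0 < x \<longrightarrow> x \<le> y \<longrightarrow> \<phi> y \<le> \<phi> x" "\<forall>x\<ge>T. \<phi> x = 0"
    unfolding nice_fn_def by metis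
  show ?thesis unfolding nice_fn_def
    apply (rule exI[of _ M], rule exI[of _ "T * \<sigma>"])
    using a \<open>0 < \<sigma>\<close> by (auto simp: divide_right_mono pos_le_divide_eq)
qed

lemma Wi_scale:
  assumes "0 < s" "0 < \<sigma>"
  shows "Wi s (\<lambda>x. \<phi> (x / \<sigma>)) = \<sigma> powr s * Wi s \<phi>"
proof -
  let ?f = "\<lambda>x. indicator {0<..} x *\<^sub>R (s * x powr (s - 1) * \<phi> (x / \<sigma>))"
  let ?g = "\<lambda>x. indicator {0<..} x *\<^sub>R (s * x powr (s - 1) * \<phi> x)"
  have "integral\<^sup>L lborel ?f = \<bar>\<sigma>\<bar> *\<^sub>R integral\<^sup>L lborel (\<lambda>x. ?f (0 + \<sigma> * x))"
    using assms by (intro lborel_integral_real_affine) auto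
  also have "\<dots> = integral\<^sup>L lborel (\<lambda>x. \<sigma> * ?f (\<sigma> * x))"
    using assms by simp
  also have "(\<lambda>x. \<sigma> * ?f (\<sigma> * x)) = (\<lambda>x. \<sigma> powr s * ?g x)"
  proof
    fix x :: real
    show "\<sigma> * ?f (\<sigma> * x) = \<sigma> powr s * ?g x"
    proof (cases "0 < x")
      case True
      have "(\<sigma> * x) powr (s - 1) = \<sigma> powr (s - 1) * x powr (s - 1)"
        using True assms by (simp add: powr_mult)
      moreover have "\<sigma> * \<sigma> powr (s - 1) = \<sigma> powr s"
        using assms by (simp add: powr_diff)
      ultimately show ?thesis using True assms
        by (simp add: zero_less_mult_iff)
    next
      case False
      then show ?thesis using assms by (simp add: zero_less_mult_iff)
    qed
  qed
  also have "integral\<^sup>L lborel (\<lambda>x. \<sigma> powr s * ?g x) = \<sigma> powr s * integral\<^sup>L lborel ?g"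
    by simp
  finally show ?thesis unfolding Wi_def set_lebesgue_integral_def .
qed


lemma powr_le_iff_base: "0 < t \<Longrightarrow> 0 \<le> x \<Longrightarrow> 0 \<le> (y::real) \<Longrightarrow> x powr t \<le> y powr t \<longleftrightarrow> x \<le> y"
  by (meson linorder_not_le powr_less_mono2 powr_mono2 less_imp_le)

lemma powr_less_iff_base: "0 < t \<Longrightarrow> 0 \<le> x \<Longrightarrow> 0 \<le> (y::real) \<Longrightarrow> x powr t < y powr t \<longleftrightarrow> x < y"
  by (meson linorder_not_le powr_less_mono2 powr_mono2 less_imp_le)

lemma restr_restr: "restr A (restr B h) = restr (A \<inter> B) h"
  by (auto simp: restr_def fun_eq_iff)

lemma restr_empty: "restr {} h = (\<lambda>_. 0)"
  by (auto simp: restr_def fun_eq_iff)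

lemma restr_zero: "restr A (\<lambda>_. 0) = (\<lambda>_. 0)"
  by (auto simp: restr_def fun_eq_iff)

lemma restr_cong_set: "A = B \<Longrightarrow> restr A h = restr B h" by simp

locale lev =
  fixes X :: "'a set" and m :: "'a set \<Rightarrow> real" and t :: real
    and S :: "('a \<Rightarrow> complex) \<Rightarrow> real"
  assumes finX: "finite X" and om: "outer_measure X m" and tpos: "0 < t"
    and S_nonneg: "\<And>h. 0 \<le> S h" and S_zero: "S (\<lambda>_. 0) = 0"
    and S_mono: "\<And>h C D. C \<subseteq> D \<Longrightarrow> D \<subseteq> X \<Longrightarrow> S (restr C h) \<le> S (restr D h)"
begin

abbreviation "ls \<equiv> loc_size m t S"
abbreviation "LI \<equiv> Linf_norm X m t S"
abbreviation "SL \<equiv> super_level X m t S"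

lemma m_empty: "m {} = 0" using om unfolding outer_measure_def by auto
lemma m_mono: "A \<subseteq> B \<Longrightarrow> B \<subseteq> X \<Longrightarrow> m A \<le> m B" using om unfolding outer_measure_def by auto
lemma m_nonneg: "A \<subseteq> X \<Longrightarrow> 0 \<le> m A" using m_mono[of "{}" A] m_empty by auto
lemma m_pos: "A \<subseteq> X \<Longrightarrow> A \<noteq> {} \<Longrightarrow> 0 < m A" using om unfolding outer_measure_def by auto
lemma m_union: "A \<subseteq> X \<Longrightarrow> B \<subseteq> X \<Longrightarrow> m (A \<union> B) \<le> m A + m B"
  using om unfolding outer_measure_def by auto

lemma m_Union: "finite \<A> \<Longrightarrow> \<Union>\<A> \<subseteq> X \<Longrightarrow> m (\<Union>\<A>) \<le> (\<Sum>A\<in>\<A>. m A)"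
proof (induction \<A> rule: finite_induct)
  case empty then show ?case by (simp add: m_empty)
next
  case (insert A \<A>)
  then have "m (A \<union> \<Union>\<A>) \<le> m A + m (\<Union>\<A>)" by (intro m_union) auto
  then show ?case using insert by auto
qed

lemma m_UN: "finite I \<Longrightarrow> (\<Union>i\<in>I. E i) \<subseteq> X \<Longrightarrow> m (\<Union>i\<in>I. E i) \<le> (\<Sum>i\<in>I. m (E i))"
proof (induction I rule: finite_induct)
  case empty then show ?case by (simp add: m_empty)
next
  case (insert i I)
  then have "m (E i \<union> (\<Union>j\<in>I. E j)) \<le> m (E i) + m (\<Union>j\<in>I. E j)" by (intro m_union) auto
  then show ?case using insert by auto
qed

lemma ls_def: "ls h A = m A powr (- 1 / t) * S (restr A h)"
  by (simp add: loc_size_def)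

lemma ls_nonneg: "0 \<le> ls h A"
  by (simp add: ls_def S_nonneg)

lemma ls_pow:
  assumes "A \<subseteq> X" "A \<noteq> {}"
  shows "ls h A powr t = S (restr A h) powr t / m A"
proof -
  have p: "0 < m A" using m_pos assms by auto
  have "ls h A powr t = (m A powr (- 1 / t)) powr t * S (restr A h) powr t"
    by (simp add: ls_def powr_mult S_nonneg)
  also have "(m A powr (- 1 / t)) powr t = m A powr (-1)"
    using tpos by (simp add: powr_powr)
  finally show ?thesis using p by (simp add: powr_minus divide_inverse)
qed

lemma ls_le_iff:
  assumes "A \<subseteq> X" "A \<noteq> {}" "0 \<le> a"
  shows "ls h A \<le> a \<longleftrightarrow> S (restr A h) powr t \<le> a powr t * m A"
proof -
  have p: "0 < m A" using m_pos assms by auto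
  have "ls h A \<le> a \<longleftrightarrow> ls h A powr t \<le> a powr t"
    using powr_le_iff_base[OF tpos ls_nonneg assms(3)] by simp
  also have "\<dots> \<longleftrightarrow> S (restr A h) powr t \<le> a powr t * m A"
    using p by (simp add: ls_pow[OF assms(1,2)] pos_divide_le_eq)
  finally show ?thesis .
qed

lemma ls_gt_iff:
  assumes "A \<subseteq> X" "A \<noteq> {}" "0 \<le> a"
  shows "a < ls h A \<longleftrightarrow> a powr t * m A < S (restr A h) powr t"
  using ls_le_iff[OF assms, of h] by auto

lemma fin_sets: "finite {A. A \<subseteq> X \<and> A \<noteq> {}}"
  using finX by (rule finite_subset[rotated, OF finite_Pow_iff[THEN iffD2]]) auto

lemma LI_def': "LI h = Sup (insert 0 (ls h ` {A. A \<subseteq> X \<and> A \<noteq> {}}))"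
  by (simp add: Linf_norm_def)

lemma LI_nonneg: "0 \<le> LI h"
  unfolding LI_def' using fin_sets by (intro cSup_upper) auto

lemma ls_le_LI: "A \<subseteq> X \<Longrightarrow> A \<noteq> {} \<Longrightarrow> ls h A \<le> LI h"
  unfolding LI_def' using fin_sets by (intro cSup_upper) auto

lemma LI_le: "0 \<le> a \<Longrightarrow> (\<And>A. A \<subseteq> X \<Longrightarrow> A \<noteq> {} \<Longrightarrow> ls h A \<le> a) \<Longrightarrow> LI h \<le> a"
  unfolding LI_def' by (intro cSup_least) auto

lemma LI_zero: "LI (\<lambda>_. 0) = 0"
  using LI_nonneg[of "\<lambda>_. 0"] LI_le[of 0 "\<lambda>_. 0"]
  by (simp add: ls_def restr_zero S_zero)

lemma ls_restr_mono: "C \<subseteq> D \<Longrightarrow> A \<subseteq> X \<Longrightarrow> ls (restr C h) A \<le> ls (restr D h) A"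
  unfolding ls_def restr_restr
  by (intro mult_left_mono S_mono) auto

lemma LI_restr_mono: "C \<subseteq> D \<Longrightarrow> LI (restr C h) \<le> LI (restr D h)"
  by (intro LI_le LI_nonneg order.trans[OF ls_restr_mono ls_le_LI]) auto

lemma LI_restrX: "LI (restr X h) \<le> LI h"
proof (intro LI_le LI_nonneg)
  fix A assume "A \<subseteq> X" "A \<noteq> {}"
  moreover have "ls (restr X h) A = ls h A" using \<open>A \<subseteq> X\<close>
    unfolding ls_def restr_restr by (simp add: Int_absorb2)
  ultimately show "ls (restr X h) A \<le> LI h" using ls_le_LI by simp
qed

lemma SL_def': "SL h lam = Inf {m B | B. B \<subseteq> X \<and> LI (restr (X - B) h) \<le> lam}"
  by (simp add: super_level_def)

lemma SL_le: "B \<subseteq> X \<Longrightarrow> LI (restr (X - B) h) \<le> lam \<Longrightarrow> SL h lam \<le> m B"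
  unfolding SL_def' by (rule cInf_lower) (auto intro!: bdd_belowI[of _ 0] m_nonneg)

lemma SL_ge: "0 \<le> lam \<Longrightarrow> (\<And>B. B \<subseteq> X \<Longrightarrow> LI (restr (X - B) h) \<le> lam \<Longrightarrow> c \<le> m B) \<Longrightarrow> c \<le> SL h lam"
  unfolding SL_def'
proof (rule cInf_greatest)
  assume "0 \<le> lam"
  then have "LI (restr (X - X) h) \<le> lam" by (simp add: restr_empty LI_zero)
  then show "{m B | B. B \<subseteq> X \<and> LI (restr (X - B) h) \<le> lam} \<noteq> {}" by blast
qed auto

lemma SL_nonneg: "0 \<le> lam \<Longrightarrow> 0 \<le> SL h lam"
  by (rule SL_ge) (auto intro: m_nonneg)

lemma SL_leX: "0 \<le> lam \<Longrightarrow> SL h lam \<le> m X"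
  by (rule SL_le) (auto simp: restr_empty LI_zero)

lemma SL_zero: "LI h \<le> lam \<Longrightarrow> SL h lam = 0"
  using SL_le[of "{}" h lam] LI_restrX[of h] SL_nonneg[of lam h] LI_nonneg[of h]
  by (simp add: m_empty)

lemma SL_anti: "0 \<le> lam1 \<Longrightarrow> lam1 \<le> lam2 \<Longrightarrow> SL h lam2 \<le> SL h lam1"
  by (rule SL_ge) (auto intro: SL_le)

lemma SL_nice: "nice_fn (SL h)"
  unfolding nice_fn_def
  apply (rule exI[of _ "m X"], rule exI[of _ "LI h + 1"])
  using LI_nonneg[of h] by (auto simp: SL_nonneg SL_leX SL_anti SL_zero)

lemma SL_restr_mono: "C \<subseteq> D \<Longrightarrow> 0 \<le> lam \<Longrightarrow> SL (restr C h) lam \<le> SL (restr D h) lam"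
proof (rule SL_ge)
  fix B assume "C \<subseteq> D" "B \<subseteq> X" "LI (restr (X - B) (restr D h)) \<le> lam"
  moreover have "LI (restr (X - B) (restr C h)) \<le> LI (restr (X - B) (restr D h))"
    unfolding restr_restr using \<open>C \<subseteq> D\<close> by (intro LI_restr_mono) auto
  ultimately show "SL (restr C h) lam \<le> m B" by (intro SL_le) auto
qed

lemma Lout_eq: "Lout_norm X m t s S h = Wi s (SL h) powr (1 / s)"
  by (simp add: Lout_norm_def Wi_def)

lemma Wi_SL_nonneg: "0 < s \<Longrightarrow> 0 \<le> Wi s (SL h)"
  by (intro Wi_nonneg SL_nonneg) auto

lemma Lout_pow: "0 < s \<Longrightarrow> Lout_norm X m t s S h powr s = Wi s (SL h)"
  unfolding Lout_eq powr_powr using Wi_SL_nonneg[of s h] by simp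

lemma Wi_SL_mono: "0 < s \<Longrightarrow> C \<subseteq> D \<Longrightarrow> Wi s (SL (restr C h)) \<le> Wi s (SL (restr D h))"
  by (intro Wi_mono Wint_nice SL_nice SL_restr_mono) auto

lemma SL_carath:
  assumes "caratheodory X m K \<A>" "0 < K" "0 \<le> lam"
  shows "(\<Sum>A\<in>\<A>. SL (restr A h) lam) \<le> K * SL h lam"
proof -
  have sub: "\<A> \<subseteq> Pow X" and car: "\<And>U. U \<subseteq> X \<Longrightarrow> (\<Sum>A\<in>\<A>. m (U \<inter> A)) \<le> K * m (U \<inter> \<Union>\<A>)"
    using assms(1) unfolding caratheodory_def by auto
  have "(\<Sum>A\<in>\<A>. SL (restr A h) lam) / K \<le> SL h lam"
  proof (rule SL_ge[OF assms(3)])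
    fix B assume B: "B \<subseteq> X" "LI (restr (X - B) h) \<le> lam"
    have "SL (restr A h) lam \<le> m (B \<inter> A)" if "A \<in> \<A>" for A
    proof (rule SL_le)
      show "B \<inter> A \<subseteq> X" using B by auto
      have "LI (restr (X - B \<inter> A) (restr A h)) \<le> LI (restr (X - B) h)"
        unfolding restr_restr by (intro LI_restr_mono) auto
      then show "LI (restr (X - B \<inter> A) (restr A h)) \<le> lam" using B by simp
    qed
    then have "(\<Sum>A\<in>\<A>. SL (restr A h) lam) \<le> (\<Sum>A\<in>\<A>. m (B \<inter> A))" by (rule sum_mono)
    also have "\<dots> \<le> K * m (B \<inter> \<Union>\<A>)" using car B by auto
    also have "\<dots> \<le> K * m B" using B assms(2) by (intro mult_left_mono m_mono) auto
    finally show "(\<Sum>A\<in>\<A>. SL (restr A h) lam) / K \<le> m B" using assms(2) by (simp add: divide_le_eq mult.commute)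
  qed
  then show ?thesis using assms(2) by (simp add: divide_le_eq mult.commute)
qed

lemma fin_carath: "caratheodory X m K \<A> \<Longrightarrow> finite \<A>"
  unfolding caratheodory_def using finX by (meson finite_Pow_iff finite_subset)

lemma Wi_carath:
  assumes "caratheodory X m K \<A>" "0 < K" "0 < s"
  shows "(\<Sum>A\<in>\<A>. Wi s (SL (restr A h))) \<le> K * Wi s (SL h)"
proof -
  have f: "finite \<A>" by (rule fin_carath[OF assms(1)])
  have "(\<Sum>A\<in>\<A>. Wi s (SL (restr A h))) = Wi s (\<lambda>x. \<Sum>A\<in>\<A>. SL (restr A h) x)"
    using f assms by (intro Wi_sum[symmetric] Wint_nice SL_nice) auto
  also have "\<dots> \<le> Wi s (\<lambda>x. K * SL h x)"
    using f assms
    by (intro Wi_mono Wint_sum Wint_cmult Wint_nice SL_nice SL_carath) auto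
  also have "\<dots> = K * Wi s (SL h)"
    using assms by (intro Wi_cmult Wint_nice SL_nice)
  finally show ?thesis .
qed

end


locale lev_q = lev +
  fixes \<kappa> :: real
  assumes kpos: "0 < \<kappa>"
    and quasi: "\<And>h C D. C \<inter> D = {} \<Longrightarrow> C \<union> D \<subseteq> X \<Longrightarrow>
       S (restr (C \<union> D) h) powr t \<le> \<kappa> * (S (restr C h) powr t + S (restr D h) powr t)"
begin

definition "\<sigma> = (2 * \<kappa>) powr (1 / t)"

lemma sig_pos: "0 < \<sigma>" using kpos by (simp add: \<sigma>_def)

lemma sig_pow: "\<sigma> powr t = 2 * \<kappa>"
  using kpos tpos by (simp add: \<sigma>_def powr_powr)

lemma SL_quasi:
  assumes CD: "C \<inter> D = {}" and lam: "0 < lam"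
  shows "SL (restr (C \<union> D) h) lam \<le> SL (restr C h) (lam / \<sigma>) + SL (restr D h) (lam / \<sigma>)"
proof -
  have l': "0 \<le> lam / \<sigma>" using lam sig_pos by simp
  have key: "SL (restr (C \<union> D) h) lam \<le> m B1 + m B2"
    if B1: "B1 \<subseteq> X" "LI (restr (X - B1) (restr C h)) \<le> lam / \<sigma>"
    and B2: "B2 \<subseteq> X" "LI (restr (X - B2) (restr D h)) \<le> lam / \<sigma>" for B1 B2
  proof -
    let ?B = "B1 \<union> B2"
    have "LI (restr (X - ?B) (restr (C \<union> D) h)) \<le> lam"
    proof (rule LI_le)
      show "0 \<le> lam" using lam by simp
      fix A assume A: "A \<subseteq> X" "A \<noteq> {}"
      let ?P1 = "A \<inter> ((X - ?B) \<inter> C)" and ?P2 = "A \<inter> ((X - ?B) \<inter> D)"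
      have e: "restr A (restr (X - ?B) (restr (C \<union> D) h)) = restr (?P1 \<union> ?P2) h"
        unfolding restr_restr by (rule restr_cong_set) auto
      have q: "S (restr (?P1 \<union> ?P2) h) powr t \<le> \<kappa> * (S (restr ?P1 h) powr t + S (restr ?P2 h) powr t)"
        using CD A by (intro quasi) auto
      have b1: "S (restr ?P1 h) powr t \<le> (lam / \<sigma>) powr t * m A"
      proof -
        have "S (restr ?P1 h) \<le> S (restr (A \<inter> ((X - B1) \<inter> C)) h)"
          using A by (intro S_mono) auto
        then have "S (restr ?P1 h) powr t \<le> S (restr (A \<inter> ((X - B1) \<inter> C)) h) powr t"
          using tpos by (intro powr_mono2) (auto simp: S_nonneg)
        also have "\<dots> \<le> (lam / \<sigma>) powr t * m A"
        proof -
          have "ls (restr (X - B1) (restr C h)) A \<le> lam / \<sigma>"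
            using ls_le_LI[OF A, of "restr (X - B1) (restr C h)"] B1(2) by (rule order.trans)
          then show ?thesis using ls_le_iff[OF A l'] by (simp add: restr_restr)
        qed
        finally show ?thesis .
      qed
      have b2: "S (restr ?P2 h) powr t \<le> (lam / \<sigma>) powr t * m A"
      proof -
        have "S (restr ?P2 h) \<le> S (restr (A \<inter> ((X - B2) \<inter> D)) h)"
          using A by (intro S_mono) auto
        then have "S (restr ?P2 h) powr t \<le> S (restr (A \<inter> ((X - B2) \<inter> D)) h) powr t"
          using tpos by (intro powr_mono2) (auto simp: S_nonneg)
        also have "\<dots> \<le> (lam / \<sigma>) powr t * m A"
        proof -
          have "ls (restr (X - B2) (restr D h)) A \<le> lam / \<sigma>"
            using ls_le_LI[OF A, of "restr (X - B2) (restr D h)"] B2(2) by (rule order.trans)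
          then show ?thesis using ls_le_iff[OF A l'] by (simp add: restr_restr)
        qed
        finally show ?thesis .
      qed
      have "(lam / \<sigma>) powr t = lam powr t / (2 * \<kappa>)"
        using lam sig_pos by (simp add: powr_divide sig_pow)
      then have "\<kappa> * ((lam / \<sigma>) powr t * m A + (lam / \<sigma>) powr t * m A) = lam powr t * m A"
        using kpos by (simp add: field_simps)
      moreover have "\<kappa> * (S (restr ?P1 h) powr t + S (restr ?P2 h) powr t)
          \<le> \<kappa> * ((lam / \<sigma>) powr t * m A + (lam / \<sigma>) powr t * m A)"
        using kpos by (intro mult_left_mono add_mono b1 b2) auto
      ultimately have "S (restr (?P1 \<union> ?P2) h) powr t \<le> lam powr t * m A"
        using q by linarith
      then show "ls (restr (X - ?B) (restr (C \<union> D) h)) A \<le> lam"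
        using ls_le_iff[OF A, of lam] lam e by simp
    qed
    then have "SL (restr (C \<union> D) h) lam \<le> m ?B" using B1 B2 by (intro SL_le) auto
    also have "\<dots> \<le> m B1 + m B2" using B1 B2 by (intro m_union)
    finally show ?thesis .
  qed
  have "SL (restr (C \<union> D) h) lam - SL (restr C h) (lam / \<sigma>) \<le> SL (restr D h) (lam / \<sigma>)"
  proof (rule SL_ge[OF l'])
    fix B2 assume B2: "B2 \<subseteq> X" "LI (restr (X - B2) (restr D h)) \<le> lam / \<sigma>"
    have "SL (restr (C \<union> D) h) lam - m B2 \<le> SL (restr C h) (lam / \<sigma>)"
    proof (rule SL_ge[OF l'])
      fix B1 assume B1: "B1 \<subseteq> X" "LI (restr (X - B1) (restr C h)) \<le> lam / \<sigma>"
      show "SL (restr (C \<union> D) h) lam - m B2 \<le> m B1" using key[OF B1 B2] by simp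
    qed
    then show "SL (restr (C \<union> D) h) lam - SL (restr C h) (lam / \<sigma>) \<le> m B2" by simp
  qed
  then show ?thesis by simp
qed

lemma Wi_quasi:
  assumes "0 < s" "C \<inter> D = {}"
  shows "Wi s (SL (restr (C \<union> D) h)) \<le> \<sigma> powr s * (Wi s (SL (restr C h)) + Wi s (SL (restr D h)))"
proof -
  have n1: "nice_fn (\<lambda>x. SL (restr C h) (x / \<sigma>))" and n2: "nice_fn (\<lambda>x. SL (restr D h) (x / \<sigma>))"
    using sig_pos by (auto intro: nice_scale SL_nice)
  have "Wi s (SL (restr (C \<union> D) h)) \<le> Wi s (\<lambda>x. SL (restr C h) (x / \<sigma>) + SL (restr D h) (x / \<sigma>))"
    using assms n1 n2 by (intro Wi_mono Wint_nice SL_nice Wint_add SL_quasi) auto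
  also have "\<dots> = Wi s (\<lambda>x. SL (restr C h) (x / \<sigma>)) + Wi s (\<lambda>x. SL (restr D h) (x / \<sigma>))"
    using assms n1 n2 by (intro Wi_add Wint_nice)
  also have "\<dots> = \<sigma> powr s * (Wi s (SL (restr C h)) + Wi s (SL (restr D h)))"
    using assms sig_pos by (simp add: Wi_scale distrib_left)
  finally show ?thesis .
qed

end


lemma Lr_pow: "(\<forall>x\<in>X. 0 < w x) \<Longrightarrow> 0 < r \<Longrightarrow> Lr_norm X w r h powr r = (\<Sum>x\<in>X. w x * cmod (h x) powr r)"
  unfolding Lr_norm_def powr_powr
  by (simp add: sum_nonneg less_imp_le)

locale setting =
  fixes X :: "'a set" and \<mu> \<nu> :: "'a set \<Rightarrow> real" and w :: "'a \<Rightarrow> real"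
    and \<E> :: "'a set set" and \<C> :: "'a set \<Rightarrow> 'a set set" and f :: "'a \<Rightarrow> complex"
    and p q r \<Phi> K :: real
  assumes finX: "finite X" and om\<mu>: "outer_measure X \<mu>" and om\<nu>: "outer_measure X \<nu>"
    and wpos: "\<forall>x\<in>X. 0 < w x" and can: "canopy X \<mu> \<nu> \<Phi> K \<E> \<C>"
    and ppos: "0 < p" and qpos: "0 < q" and rpos: "0 < r" and Phi1: "1 \<le> \<Phi>" and K1: "1 \<le> K"
begin

sublocale nu: lev_q X \<nu> r "Lr_norm X w r" 1
proof
  show "finite X" "outer_measure X \<nu>" "0 < r" "(0::real) < 1" by (auto simp: finX om\<nu> rpos)
  show "0 \<le> Lr_norm X w r h" for h by (simp add: Lr_norm_def)
  show "Lr_norm X w r (\<lambda>_. 0) = 0" by (simp add: Lr_norm_def)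
  show "Lr_norm X w r (restr C h) \<le> Lr_norm X w r (restr D h)" if "C \<subseteq> D" "D \<subseteq> X" for h C D
    unfolding Lr_norm_def using that wpos rpos
    by (intro powr_mono2 sum_mono mult_left_mono sum_nonneg) (auto simp: restr_def less_imp_le)
  show "Lr_norm X w r (restr (C \<union> D) h) powr r
      \<le> 1 * (Lr_norm X w r (restr C h) powr r + Lr_norm X w r (restr D h) powr r)"
    if "C \<inter> D = {}" "C \<union> D \<subseteq> X" for h C D
    unfolding Lr_pow[OF wpos rpos] using that rpos
    by (auto simp: sum.distrib[symmetric] restr_def distrib_left intro!: sum_mono)
qed

abbreviation "N \<equiv> Lout_norm X \<nu> r q (Lr_norm X w r)"

lemma N_pow: "N h powr q = Wi q (nu.SL h)"
  using nu.Lout_pow[OF qpos] .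

lemma SL_nu_zero: "0 \<le> lam \<Longrightarrow> nu.SL (\<lambda>_. 0) lam = 0"
  by (intro nu.SL_zero) (simp add: nu.LI_zero)

lemma N_zero: "N (\<lambda>_. 0) = 0"
proof -
  have "Wi q (nu.SL (\<lambda>_. 0)) = Wi q (\<lambda>_. 0)"
    by (rule Wint_Wi_cong(2)) (simp add: SL_nu_zero)
  then show ?thesis by (simp add: nu.Lout_eq Wi_def)
qed

sublocale mu: lev X \<mu> q N
proof
  show "finite X" "outer_measure X \<mu>" "0 < q" by (auto simp: finX om\<mu> qpos)
  show "0 \<le> N h" for h by (simp add: Lout_norm_def)
  show "N (\<lambda>_. 0) = 0" by (rule N_zero)
  show "N (restr C h) \<le> N (restr D h)" if "C \<subseteq> D" "D \<subseteq> X" for h C D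
    unfolding nu.Lout_eq using that qpos
    by (intro powr_mono2 nu.Wi_SL_mono nu.Wi_SL_nonneg) auto
qed

definition "\<rho> = nu.\<sigma> powr q"

lemma rho_ge1: "1 \<le> \<rho>"
proof -
  have "1 \<le> nu.\<sigma>" unfolding nu.\<sigma>_def using rpos by (simp add: ge_one_powr_ge_zero)
  then show ?thesis unfolding \<rho>_def using qpos by (simp add: ge_one_powr_ge_zero)
qed

lemma N_quasi: "C \<inter> D = {} \<Longrightarrow> N (restr (C \<union> D) h) powr q \<le> \<rho> * (N (restr C h) powr q + N (restr D h) powr q)"
  unfolding N_pow \<rho>_def using nu.Wi_quasi[OF qpos] .

lemma N_carath: "caratheodory X \<nu> K \<A> \<Longrightarrow> (\<Sum>A\<in>\<A>. N (restr A h) powr q) \<le> K * N h powr q"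
  unfolding N_pow using nu.Wi_carath[OF _ _ qpos] K1 by auto

end


context setting begin

abbreviation "BC \<equiv> cover_union \<C>"

lemma covf: "covering_function X \<mu> \<Phi> \<E> \<C>" using can unfolding canopy_def by auto

lemma cov_parts: "\<E> \<subseteq> Pow X" "\<And>A. A \<subseteq> X \<Longrightarrow> \<C> A \<subseteq> \<E>"
  "\<And>A. A \<subseteq> X \<Longrightarrow> A \<subseteq> BC A" "\<And>A. A \<subseteq> X \<Longrightarrow> \<mu> (BC A) \<le> \<Phi> * \<mu> A"
  "\<And>A A'. A \<subseteq> A' \<Longrightarrow> A' \<subseteq> X \<Longrightarrow> BC A \<subseteq> BC A'"
  using covf unfolding covering_function_def by (simp_all (no_asm_simp))

lemma cov: "A \<subseteq> X \<Longrightarrow> BC A \<subseteq> X"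
  using cov_parts(1) cov_parts(2)[of A] unfolding cover_union_def by auto

lemma cov_sup: "A \<subseteq> X \<Longrightarrow> A \<subseteq> BC A" by (rule cov_parts(3))

lemma cov_meas: "A \<subseteq> X \<Longrightarrow> \<mu> (BC A) \<le> \<Phi> * \<mu> A" by (rule cov_parts(4))

lemma cov_mono: "A \<subseteq> A' \<Longrightarrow> A' \<subseteq> X \<Longrightarrow> BC A \<subseteq> BC A'" by (rule cov_parts(5))

lemma cov_empty: "BC {} = {}"
proof -
  have "\<mu> (BC {}) \<le> 0" using cov_meas[of "{}"] mu.m_empty by simp
  then show ?thesis using mu.m_pos[of "BC {}"] cov[of "{}"] by fastforce
qed

lemma can_ext: "caratheodory X \<nu> K \<A> \<Longrightarrow> D \<subseteq> X \<Longrightarrow> D \<inter> BC (\<Union>\<A>) = {} \<Longrightarrow> caratheodory X \<nu> K (insert D \<A>)"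
  using can unfolding canopy_def by (simp (no_asm_simp))

lemma carath_empty: "caratheodory X \<nu> K {}"
  unfolding caratheodory_def by (simp add: nu.m_empty)

definition "cc = (2 * K * \<rho>) powr (- 1 / q)"
definition "CC = 2 * K * \<rho> * 2 powr q"

lemma cc_pos: "0 < cc" using K1 rho_ge1 by (simp add: cc_def)
lemma CC_pos: "0 < CC" using K1 rho_ge1 by (simp add: CC_def)

lemma cc_pow: "cc powr q = 1 / (2 * K * \<rho>)"
proof -
  have "cc powr q = (2 * K * \<rho>) powr (- 1 / q * q)" by (simp add: cc_def powr_powr)
  also have "- 1 / q * q = - 1" using qpos by simp
  also have "(2 * K * \<rho>) powr (- 1) = 1 / (2 * K * \<rho>)"
    using K1 rho_ge1 by (simp add: powr_minus_divide)
  finally show ?thesis .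
qed

lemma N_empty: "N (restr {} h) = 0" by (simp add: restr_empty N_zero)

lemma step:
  assumes U: "U \<subseteq> X" and a: "0 < a" and hyp: "mu.LI (restr (X - BC U) f) \<le> 2 * a"
  shows "\<exists>E. E \<subseteq> X \<and> E \<inter> BC U = {} \<and> (E \<noteq> {} \<longrightarrow> cc * a < mu.ls (restr (X - BC U) f) E)
     \<and> mu.LI (restr (X - BC (U \<union> E)) f) \<le> a \<and> \<mu> E \<le> CC * mu.SL f (cc * a)"
proof -
  define g where "g = restr (X - BC U) f"
  define \<SS> where "\<SS> = {\<A>. caratheodory X \<nu> K \<A> \<and> (\<forall>A\<in>\<A>. A \<noteq> {} \<and> A \<subseteq> X - BC U \<and> a < mu.ls g A)}"
  have fin\<SS>: "finite \<SS>"
  proof (rule finite_subset)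
    show "\<SS> \<subseteq> Pow (Pow X)" unfolding \<SS>_def caratheodory_def by auto
    show "finite (Pow (Pow X))" using finX by simp
  qed
  have e\<SS>: "{} \<in> \<SS>" unfolding \<SS>_def using carath_empty by simp
  define n where "n = Max ((\<lambda>\<A>. card (\<Union>\<A>)) ` \<SS>)"
  have "n \<in> (\<lambda>\<A>. card (\<Union>\<A>)) ` \<SS>" unfolding n_def using fin\<SS> e\<SS> by (intro Max_in) auto
  then obtain \<A> where A\<SS>: "\<A> \<in> \<SS>" and An: "card (\<Union>\<A>) = n" by auto
  have maxA: "card (\<Union>\<A>') \<le> card (\<Union>\<A>)" if "\<A>' \<in> \<SS>" for \<A>'
    unfolding An n_def using fin\<SS> that by (intro Max_ge) auto
  have car: "caratheodory X \<nu> K \<A>" and Aprop: "\<And>A. A \<in> \<A> \<Longrightarrow> A \<noteq> {} \<and> A \<subseteq> X - BC U \<and> a < mu.ls g A"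
    using A\<SS> unfolding \<SS>_def by auto
  define E where "E = \<Union>\<A>"
  have EX: "E \<subseteq> X - BC U" using Aprop unfolding E_def by blast
  then have EX': "E \<subseteq> X" by blast
  have UE: "U \<union> E \<subseteq> X" using U EX by blast
  have finA: "finite \<A>" using car by (rule nu.fin_carath)
  have aq: "0 < a powr q" using a by simp
  have b: "mu.LI (restr (X - BC (U \<union> E)) f) \<le> a"
  proof (rule mu.LI_le)
    show "0 \<le> a" using a by simp
    fix A' assume A': "A' \<subseteq> X" "A' \<noteq> {}"
    show "mu.ls (restr (X - BC (U \<union> E)) f) A' \<le> a"
    proof (rule ccontr)
      assume "\<not> ?thesis"
      then have gt: "a < mu.ls (restr (X - BC (U \<union> E)) f) A'" by simp
      define A'' where "A'' = A' - BC (U \<union> E)"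
      have e1: "restr A' (restr (X - BC (U \<union> E)) f) = restr A'' f"
        unfolding restr_restr A''_def using A' by (intro restr_cong_set) auto
      have ne: "A'' \<noteq> {}"
      proof
        assume "A'' = {}"
        then have "mu.ls (restr (X - BC (U \<union> E)) f) A' = 0"
          by (simp add: mu.ls_def e1 restr_empty N_zero)
        then show False using gt a by simp
      qed
      have BU: "BC U \<subseteq> BC (U \<union> E)" using UE by (intro cov_mono) auto
      have BE: "BC E \<subseteq> BC (U \<union> E)" using UE by (intro cov_mono) auto
      have A''X: "A'' \<subseteq> X - BC U" using A' BU unfolding A''_def by blast
      have e2: "restr A'' g = restr A'' f"
        unfolding g_def restr_restr using A''X by (intro restr_cong_set) auto
      have "\<mu> A'' \<le> \<mu> A'" using A' unfolding A''_def by (intro mu.m_mono) auto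
      then have "\<mu> A' powr (- 1 / q) \<le> \<mu> A'' powr (- 1 / q)"
        using mu.m_pos[of A''] A''X ne qpos by (intro powr_mono2') auto
      then have "mu.ls (restr (X - BC (U \<union> E)) f) A' \<le> mu.ls g A''"
        unfolding mu.ls_def e1 e2 by (intro mult_right_mono) (auto simp: Lout_norm_def)
      then have gA'': "a < mu.ls g A''" using gt by simp
      have "A'' \<inter> BC (\<Union>\<A>) = {}" using BE unfolding A''_def E_def by blast
      then have "caratheodory X \<nu> K (insert A'' \<A>)" using car A''X by (intro can_ext) auto
      then have "insert A'' \<A> \<in> \<SS>" unfolding \<SS>_def using Aprop A''X ne gA'' by auto
      then have le: "card (A'' \<union> E) \<le> card E" using maxA[of "insert A'' \<A>"] unfolding E_def by simp
      have "E \<subseteq> BC (U \<union> E)" using cov_sup[OF EX'] BE by blast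
      then have disj: "A'' \<inter> E = {}" unfolding A''_def by blast
      have "finite A''" "finite E" using A''X EX' finX by (auto intro: finite_subset)
      then have "card (A'' \<union> E) = card A'' + card E" using disj by (simp add: card_Un_disjoint)
      moreover have "card A'' > 0" using ne \<open>finite A''\<close> by auto
      ultimately show False using le by simp
    qed
  qed
  have rA: "restr A (restr E g) = restr A g" if "A \<in> \<A>" for A
    unfolding restr_restr E_def using that by (intro restr_cong_set) auto
  have sumN: "(\<Sum>A\<in>\<A>. N (restr A g) powr q) \<le> K * N (restr E g) powr q"
    using N_carath[OF car, of "restr E g"] rA by simp
  have NA: "a powr q * \<mu> A < N (restr A g) powr q" if "A \<in> \<A>" for A
    using Aprop[OF that] mu.ls_gt_iff[of A a g] a by auto
  have strong: "a powr q * \<mu> E < K * N (restr E g) powr q" if "E \<noteq> {}"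
  proof -
    have "\<A> \<noteq> {}" using that unfolding E_def by auto
    have "a powr q * \<mu> E \<le> a powr q * (\<Sum>A\<in>\<A>. \<mu> A)"
      using finA EX' unfolding E_def by (intro mult_left_mono mu.m_Union) auto
    also have "\<dots> = (\<Sum>A\<in>\<A>. a powr q * \<mu> A)" by (simp add: sum_distrib_left)
    also have "\<dots> < (\<Sum>A\<in>\<A>. N (restr A g) powr q)"
      using finA \<open>\<A> \<noteq> {}\<close> NA by (intro sum_strict_mono) auto
    finally show ?thesis using sumN by simp
  qed
  have pa: "cc * a < mu.ls g E" if "E \<noteq> {}"
  proof -
    have "(cc * a) powr q * \<mu> E = a powr q * \<mu> E / (2 * K * \<rho>)"
      using cc_pos a by (simp add: powr_mult cc_pow)
    also have "\<dots> \<le> a powr q * \<mu> E / K"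
      using K1 rho_ge1 aq mu.m_nonneg[OF EX'] by (intro divide_left_mono) (auto intro!: mult_nonneg_nonneg)
    also have "\<dots> < N (restr E g) powr q"
      using strong[OF that] K1 by (simp add: divide_less_eq mult.commute)
    finally show ?thesis using mu.ls_gt_iff[of E "cc * a" g] EX' that cc_pos a by simp
  qed
  have d: "\<mu> E \<le> CC * mu.SL f (cc * a)"
  proof -
    have "\<mu> E / CC \<le> mu.SL f (cc * a)"
    proof (rule mu.SL_ge)
      show "0 \<le> cc * a" using cc_pos a by simp
      fix B assume B: "B \<subseteq> X" "mu.LI (restr (X - B) f) \<le> cc * a"
      show "\<mu> E / CC \<le> \<mu> B"
      proof (cases "E = {}")
        case True
        then show ?thesis using mu.m_empty mu.m_nonneg[OF B(1)] CC_pos by simp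
      next
        case ne: False
        have "E \<inter> B \<union> (E - B) = E" by blast
        then have q1: "N (restr E g) powr q \<le> \<rho> * (N (restr (E \<inter> B) g) powr q + N (restr (E - B) g) powr q)"
          using N_quasi[of "E \<inter> B" "E - B" g] by auto
        have q2: "N (restr (E \<inter> B) g) powr q \<le> (2 * a) powr q * \<mu> B"
        proof (cases "E \<inter> B = {}")
          case True
          then show ?thesis using mu.m_nonneg[OF B(1)] by (simp add: N_empty)
        next
          case False
          have "mu.ls g (E \<inter> B) \<le> 2 * a"
            using mu.ls_le_LI[of "E \<inter> B" g] EX' False hyp unfolding g_def by force
          then have "N (restr (E \<inter> B) g) powr q \<le> (2 * a) powr q * \<mu> (E \<inter> B)"
            using mu.ls_le_iff[of "E \<inter> B" "2 * a" g] EX' False a by auto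
          also have "\<dots> \<le> (2 * a) powr q * \<mu> B"
            using B by (intro mult_left_mono mu.m_mono) auto
          finally show ?thesis .
        qed
        have q3: "N (restr (E - B) g) powr q \<le> (cc * a) powr q * \<mu> E"
        proof -
          have e: "restr (E - B) g = restr E (restr (X - B) f)"
            unfolding g_def restr_restr using EX by (intro restr_cong_set) auto
          have "mu.ls (restr (X - B) f) E \<le> cc * a"
            using mu.ls_le_LI[of E "restr (X - B) f"] EX' ne B(2) by linarith
          then show ?thesis unfolding e using mu.ls_le_iff[of E "cc * a" "restr (X - B) f"] EX' ne cc_pos a
            by auto
        qed
        have "a powr q * \<mu> E < K * (\<rho> * ((2 * a) powr q * \<mu> B + (cc * a) powr q * \<mu> E))"
        proof -
          have "a powr q * \<mu> E < K * N (restr E g) powr q" by (rule strong[OF ne])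
          also have "\<dots> \<le> K * (\<rho> * ((2 * a) powr q * \<mu> B + (cc * a) powr q * \<mu> E))"
            using K1 rho_ge1 q1 q2 q3
            by (intro mult_left_mono order.trans[OF q1] add_mono) auto
          finally show ?thesis .
        qed
        also have "\<dots> = K * \<rho> * 2 powr q * a powr q * \<mu> B + a powr q * \<mu> E / 2"
          using K1 rho_ge1 a by (simp add: powr_mult cc_pow field_simps)
        finally have "a powr q * \<mu> E < 2 * K * \<rho> * 2 powr q * a powr q * \<mu> B" by simp
        then have "a powr q * \<mu> E < a powr q * (CC * \<mu> B)" unfolding CC_def by (simp add: algebra_simps)
        then have "\<mu> E < CC * \<mu> B" using aq by simp
        then show ?thesis using CC_pos by (simp add: divide_less_eq mult.commute less_imp_le)
      qed
    qed
    then show ?thesis using CC_pos by (simp add: divide_le_eq mult.commute)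
  qed
  show ?thesis
    apply (rule exI[of _ E])
    using EX b pa d unfolding g_def by blast
qed

end


context setting begin

definition Pstep :: "int \<Rightarrow> 'a set \<Rightarrow> 'a set \<Rightarrow> bool" where
  "Pstep k U E \<longleftrightarrow> E \<subseteq> X \<and> E \<inter> BC U = {}
     \<and> (E \<noteq> {} \<longrightarrow> cc * 2 powr real_of_int k < mu.ls (restr (X - BC U) f) E)
     \<and> mu.LI (restr (X - BC (U \<union> E)) f) \<le> 2 powr real_of_int k
     \<and> \<mu> E \<le> CC * mu.SL f (cc * 2 powr real_of_int k)"

definition "stepE k U = (SOME E. Pstep k U E)"

lemma stepE:
  assumes "U \<subseteq> X" "mu.LI (restr (X - BC U) f) \<le> 2 powr (real_of_int k + 1)"
  shows "Pstep k U (stepE k U)"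
proof -
  have "2 powr (real_of_int k + 1) = 2 * 2 powr real_of_int k" by (simp add: powr_add)
  then have "\<exists>E. Pstep k U E" unfolding Pstep_def
    using step[OF assms(1), of "2 powr real_of_int k"] assms(2) by auto
  then show ?thesis unfolding stepE_def by (rule someI_ex)
qed

definition "kt = \<lceil>log 2 (mu.LI f + 1)\<rceil>"

lemma kt: "mu.LI f \<le> 2 powr real_of_int kt"
proof -
  have p: "0 < mu.LI f + 1" using mu.LI_nonneg[of f] by simp
  have "mu.LI f + 1 = 2 powr (log 2 (mu.LI f + 1))" using p by simp
  also have "\<dots> \<le> 2 powr real_of_int kt" unfolding kt_def by (intro powr_mono) auto
  finally show ?thesis by simp
qed

primrec Us :: "nat \<Rightarrow> 'a set" where
  "Us 0 = {}"
| "Us (Suc n) = Us n \<union> stepE (kt - 1 - int n) (Us n)"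

definition "EE k = (if kt \<le> k then {} else stepE k (Us (nat (kt - 1 - k))))"

lemma Us_inv: "Us n \<subseteq> X \<and> mu.LI (restr (X - BC (Us n)) f) \<le> 2 powr real_of_int (kt - int n)"
proof (induction n)
  case 0
  then show ?case using mu.LI_restrX[of f] kt by (simp add: cov_empty)
next
  case (Suc n)
  have h: "mu.LI (restr (X - BC (Us n)) f) \<le> 2 powr (real_of_int (kt - 1 - int n) + 1)"
    using Suc by simp
  have "Pstep (kt - 1 - int n) (Us n) (stepE (kt - 1 - int n) (Us n))"
    using Suc h by (intro stepE) auto
  then show ?case using Suc unfolding Pstep_def by (simp add: algebra_simps)
qed

lemma Pstep_Us: "Pstep (kt - 1 - int n) (Us n) (stepE (kt - 1 - int n) (Us n))"
proof -
  have "mu.LI (restr (X - BC (Us n)) f) \<le> 2 powr (real_of_int (kt - 1 - int n) + 1)"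
    using Us_inv[of n] by simp
  then show ?thesis using Us_inv[of n] by (intro stepE) auto
qed

lemma Us_eq: "Us n = (\<Union>l\<in>{kt - int n..}. EE l)"
proof (induction n)
  case 0
  then show ?case by (auto simp: EE_def)
next
  case (Suc n)
  have s: "{kt - int (Suc n)..} = insert (kt - 1 - int n) {kt - int n..}" by auto
  have "EE (kt - 1 - int n) = stepE (kt - 1 - int n) (Us n)" by (simp add: EE_def)
  then show ?case using Suc unfolding s by auto
qed

lemma UN_ge: "k < kt \<Longrightarrow> (\<Union>l\<in>{k..}. EE l) = Us (nat (kt - k))"
  using Us_eq[of "nat (kt - k)"] by simp

lemma UN_ge': "kt \<le> k \<Longrightarrow> (\<Union>l\<in>{k..}. EE l) = {}"
  by (auto simp: EE_def)

lemma UN_X: "(\<Union>l\<in>{k..}. EE l) \<subseteq> X"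
  using UN_ge[of k] UN_ge'[of k] Us_inv by (cases "k < kt") auto

lemma UN_split: "(\<Union>l\<in>{k..}. EE l) = EE k \<union> (\<Union>l\<in>{k+1..}. EE l)"
proof -
  have "{k..} = insert k {k+1..}" by auto
  then show ?thesis by auto
qed

lemma EE_P: "k < kt \<Longrightarrow> Pstep k (\<Union>l\<in>{k+1..}. EE l) (EE k)"
proof -
  assume k: "k < kt"
  define n where "n = nat (kt - 1 - k)"
  have kn: "k = kt - 1 - int n" using k by (simp add: n_def)
  have "EE k = stepE k (Us n)" using k by (simp add: EE_def n_def)
  moreover have "Us n = (\<Union>l\<in>{k+1..}. EE l)" using Us_eq[of n] kn by simp
  ultimately show ?thesis using Pstep_Us[of n] kn by simp
qed

lemma EE_X: "EE k \<subseteq> X"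
  using EE_P[of k] by (cases "k < kt") (auto simp: Pstep_def EE_def)

lemma EE_sep: "EE k \<inter> BC (\<Union>l\<in>{k+1..}. EE l) = {}"
  using EE_P[of k] by (cases "k < kt") (auto simp: Pstep_def EE_def)

lemma EE_disj: "k \<noteq> l \<Longrightarrow> EE k \<inter> EE l = {}"
proof -
  have *: "EE k \<inter> EE l = {}" if "l < k" for k l
  proof -
    have "EE k \<subseteq> (\<Union>j\<in>{l+1..}. EE j)" by (rule UN_upper) (use that in auto)
    also have "\<dots> \<subseteq> BC (\<Union>j\<in>{l+1..}. EE j)" using UN_X by (intro cov_sup)
    finally show ?thesis using EE_sep[of l] by blast
  qed
  assume "k \<noteq> l"
  then show ?thesis using *[of l k] *[of k l] by (cases "l < k") (auto simp: Int_commute)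
qed

abbreviation "FF k \<equiv> BC (\<Union>l\<in>{k..}. EE l)"

lemma prop_a: "EE k \<noteq> {} \<Longrightarrow> cc * 2 powr real_of_int k < mu.ls (restr (X - FF (k + 1)) f) (EE k)"
  using EE_P[of k] by (cases "k < kt") (auto simp: Pstep_def EE_def)

lemma prop_b: "mu.LI (restr (X - FF k) f) \<le> 2 powr real_of_int k"
proof (cases "k < kt")
  case True
  then show ?thesis using EE_P[of k] UN_split[of k] by (auto simp: Pstep_def Un_commute)
next
  case False
  then have "mu.LI (restr (X - FF k) f) \<le> mu.LI f" using mu.LI_restrX[of f] by (simp add: UN_ge' cov_empty)
  also have "\<dots> \<le> 2 powr real_of_int kt" by (rule kt)
  also have "\<dots> \<le> 2 powr real_of_int k" using False by (intro powr_mono) auto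
  finally show ?thesis .
qed

lemma prop_c: "mu.SL f (2 powr real_of_int k) \<le> \<mu> (FF k)"
  using prop_b[of k] UN_X[of k] by (intro mu.SL_le cov) auto

lemma prop_d: "\<mu> (EE k) \<le> CC * mu.SL f (cc * 2 powr real_of_int k)"
proof (cases "k < kt")
  case True
  then show ?thesis using EE_P[of k] by (auto simp: Pstep_def)
next
  case False
  then show ?thesis using mu.SL_nonneg[of "cc * 2 powr real_of_int k" f] cc_pos CC_pos
    by (simp add: EE_def mu.m_empty)
qed

definition "LL = {k. EE k \<noteq> {}}"

lemma LL_fin: "finite LL"
proof -
  have "inj_on EE LL"
  proof (rule inj_onI)
    fix k l assume kl: "k \<in> LL" "l \<in> LL" "EE k = EE l"
    show "k = l"
    proof (rule ccontr)
      assume "k \<noteq> l"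
      then have "EE k \<inter> EE l = {}" by (rule EE_disj)
      with kl(3) have "EE k = {}" by simp
      with kl(1) show False by (simp add: LL_def)
    qed
  qed
  moreover have "EE ` LL \<subseteq> Pow X" using EE_X by auto
  then have "finite (EE ` LL)" using finX by (simp add: finite_subset)
  ultimately show ?thesis using finite_imageD by blast
qed

end


lemma has_sum_sum_fin:
  fixes f :: "'i \<Rightarrow> 'b \<Rightarrow> real"
  shows "finite I \<Longrightarrow> (\<And>i. i \<in> I \<Longrightarrow> (f i has_sum S i) A) \<Longrightarrow> ((\<lambda>x. \<Sum>i\<in>I. f i x) has_sum (\<Sum>i\<in>I. S i)) A"
proof (induction I rule: finite_induct)
  case empty then show ?case by simp
next
  case (insert i I)
  have a: "(f i has_sum S i) A" using insert.prems by auto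
  have b: "((\<lambda>x. \<Sum>i\<in>I. f i x) has_sum (\<Sum>i\<in>I. S i)) A" using insert by auto
  show ?case using has_sum_add[OF a b] insert.hyps by simp
qed

lemma geo_has_sum:
  fixes l :: int and p :: real
  assumes p: "0 < p"
  shows "((\<lambda>k::int. if k \<le> l then 2 powr (real_of_int k * p) else 0) has_sum
           (2 powr (real_of_int l * p) * (1 / (1 - 2 powr (- p))))) UNIV"
proof -
  define z where "z = 2 powr (- p)"
  have z: "0 < z" "z < 1" using p by (auto simp: z_def powr_less_one)
  have "(\<lambda>n. z ^ n) sums (1 / (1 - z))" using z by (intro geometric_sums) auto
  then have "(\<lambda>n. 2 powr (real_of_int l * p) * z ^ n) sums (2 powr (real_of_int l * p) * (1 / (1 - z)))"
    by (rule sums_mult)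
  then have h: "((\<lambda>n. 2 powr (real_of_int l * p) * z ^ n) has_sum (2 powr (real_of_int l * p) * (1 / (1 - z)))) UNIV"
    using z by (intro sums_nonneg_imp_has_sum) auto
  define g where "g n = l - int n" for n :: nat
  have bij: "bij_betw g UNIV {..l}"
  proof (rule bij_betwI')
    show "g x = g y \<longleftrightarrow> x = y" for x y by (auto simp: g_def)
    show "g x \<in> {..l}" for x by (auto simp: g_def)
    show "\<exists>x\<in>UNIV. y = g x" if "y \<in> {..l}" for y
      using that by (intro bexI[of _ "nat (l - y)"]) (auto simp: g_def)
  qed
  have e: "2 powr (real_of_int (g n) * p) = 2 powr (real_of_int l * p) * z ^ n" for n
  proof -
    have "z ^ n = 2 powr (real n * (- p))" unfolding z_def by (rule powr_power) simp
    then show ?thesis by (simp add: g_def powr_add[symmetric] algebra_simps)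
  qed
  have "((\<lambda>k::int. 2 powr (real_of_int k * p)) has_sum (2 powr (real_of_int l * p) * (1 / (1 - z)))) {..l}"
    using h has_sum_reindex_bij_betw[OF bij, of "\<lambda>k. 2 powr (real_of_int k * p)"] e by simp
  then show ?thesis unfolding z_def
    by (subst has_sum_cong_neutral[where T = "{..l}" and g = "\<lambda>k. 2 powr (real_of_int k * p)"]) auto
qed

context setting begin

definition "s1 = (\<Sum>k\<in>LL. 2 powr (real_of_int k * p) * \<mu> (EE k))"
definition "GG = 1 / (1 - 2 powr (- p))"

lemma GG_ge1: "1 \<le> GG"
proof -
  have "0 < 2 powr (- p)" "2 powr (- p) < 1" using ppos by (auto simp: powr_less_one)
  then show ?thesis unfolding GG_def by (simp add: field_simps)
qed

lemma EE_notLL: "k \<notin> LL \<Longrightarrow> EE k = {}" by (simp add: LL_def)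

lemma s1_nonneg: "0 \<le> s1"
  unfolding s1_def using EE_X by (intro sum_nonneg mult_nonneg_nonneg mu.m_nonneg) auto

lemma hs1: "((\<lambda>k. 2 powr (real_of_int k * p) * \<mu> (EE k)) has_sum s1) UNIV"
proof -
  have "((\<lambda>k. 2 powr (real_of_int k * p) * \<mu> (EE k)) has_sum s1) LL"
    unfolding s1_def using LL_fin by (rule has_sum_finite)
  then show ?thesis
    by (subst (asm) has_sum_cong_neutral[where T = UNIV and g = "\<lambda>k. 2 powr (real_of_int k * p) * \<mu> (EE k)"])
       (auto simp: EE_notLL mu.m_empty)
qed

lemma tail_sum: "infsum (\<lambda>l. \<mu> (EE l)) {k..} = (\<Sum>l\<in>LL. if k \<le> l then \<mu> (EE l) else 0)"
proof -
  have "((\<lambda>l. \<mu> (EE l)) has_sum (\<Sum>l\<in>LL \<inter> {k..}. \<mu> (EE l))) (LL \<inter> {k..})"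
    using LL_fin by (intro has_sum_finite) auto
  then have "((\<lambda>l. \<mu> (EE l)) has_sum (\<Sum>l\<in>LL \<inter> {k..}. \<mu> (EE l))) {k..}"
    by (subst (asm) has_sum_cong_neutral[where T = "{k..}" and g = "\<lambda>l. \<mu> (EE l)"])
       (auto simp: EE_notLL mu.m_empty)
  then have "infsum (\<lambda>l. \<mu> (EE l)) {k..} = (\<Sum>l\<in>LL \<inter> {k..}. \<mu> (EE l))" by (rule infsumI)
  also have "\<dots> = (\<Sum>l\<in>LL. if k \<le> l then \<mu> (EE l) else 0)"
    using LL_fin by (simp add: sum.inter_restrict)
  finally show ?thesis .
qed

lemma hs2: "((\<lambda>k. 2 powr (real_of_int k * p) * infsum (\<lambda>l. \<mu> (EE l)) {k..}) has_sum (GG * s1)) UNIV"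
proof -
  have e: "2 powr (real_of_int k * p) * infsum (\<lambda>l. \<mu> (EE l)) {k..}
      = (\<Sum>l\<in>LL. \<mu> (EE l) * (if k \<le> l then 2 powr (real_of_int k * p) else 0))" for k
    unfolding tail_sum sum_distrib_left by (intro sum.cong refl) (simp add: mult.commute)
  have "((\<lambda>k. \<Sum>l\<in>LL. \<mu> (EE l) * (if k \<le> l then 2 powr (real_of_int k * p) else 0)) has_sum
      (\<Sum>l\<in>LL. \<mu> (EE l) * (2 powr (real_of_int l * p) * GG))) UNIV"
    using LL_fin geo_has_sum[OF ppos] unfolding GG_def by (intro has_sum_sum_fin has_sum_cmult_right) auto
  moreover have "(\<Sum>l\<in>LL. \<mu> (EE l) * (2 powr (real_of_int l * p) * GG)) = GG * s1"
    unfolding s1_def by (simp add: sum_distrib_left algebra_simps)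
  ultimately show ?thesis unfolding e by simp
qed

end


lemma Wi_ind_c:
  assumes "0 \<le> a" "a < b" "0 < s"
  shows "Wint s (\<lambda>x. c * indicator {a<..<b} x)" "Wi s (\<lambda>x. c * indicator {a<..<b} x) = c * (b powr s - a powr s)"
  using Wint_ind[OF assms] by (auto intro: Wint_cmult simp: Wi_cmult)

context setting begin

lemma dyadic:
  assumes "0 < x"
  obtains k :: int where "2 powr real_of_int k \<le> x" "x < 2 powr (real_of_int k + 1)"
proof -
  define k where "k = \<lfloor>log 2 x\<rfloor>"
  have "2 powr real_of_int k \<le> 2 powr (log 2 x)"
    unfolding k_def by (intro powr_mono) auto
  then have a: "2 powr real_of_int k \<le> x" using assms by simp
  have "log 2 x < real_of_int k + 1" unfolding k_def by linarith
  then have "2 powr (log 2 x) < 2 powr (real_of_int k + 1)" by (intro powr_less_mono) auto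
  then have b: "x < 2 powr (real_of_int k + 1)" using assms by simp
  show ?thesis using a b that by blast
qed

lemma SL_f_nice: "Wint p (mu.SL f)" using ppos mu.SL_nice by (rule Wint_nice)

lemma upper: "Wi p (mu.SL f) \<le> \<Phi> * 2 powr p * s1"
proof -
  define \<phi> where "\<phi> x = (\<Sum>l\<in>LL. (\<Phi> * \<mu> (EE l)) * indicator {0<..<2 powr (real_of_int l + 1)} x)" for x
  have wint: "Wint p \<phi>"
    unfolding \<phi>_def using LL_fin ppos by (intro Wint_sum Wint_cmult Wint_ind) auto
  have "Wi p \<phi> = (\<Sum>l\<in>LL. (\<Phi> * \<mu> (EE l)) * ((2 powr (real_of_int l + 1)) powr p - 0 powr p))"
    unfolding \<phi>_def using LL_fin ppos
    by (subst Wi_sum) (auto intro!: sum.cong simp: Wi_ind_c)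
  also have "\<dots> = \<Phi> * 2 powr p * s1"
    unfolding s1_def sum_distrib_left
  proof (intro sum.cong refl)
    fix l assume "l \<in> LL"
    have "(2 powr (real_of_int l + 1)) powr p = 2 powr (real_of_int l * p) * 2 powr p"
      by (simp add: powr_powr powr_add[symmetric] algebra_simps)
    then show "\<Phi> * \<mu> (EE l) * ((2 powr (real_of_int l + 1)) powr p - 0 powr p)
        = \<Phi> * 2 powr p * (2 powr (real_of_int l * p) * \<mu> (EE l))" by simp
  qed
  finally have W: "Wi p \<phi> = \<Phi> * 2 powr p * s1" .
  have pt: "mu.SL f x \<le> \<phi> x" if x: "0 < x" for x
  proof -
    obtain k where k: "2 powr real_of_int k \<le> x" "x < 2 powr (real_of_int k + 1)"
      using dyadic[OF x] by blast
    have "mu.SL f x \<le> mu.SL f (2 powr real_of_int k)" using k by (intro mu.SL_anti) auto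
    also have "\<dots> \<le> \<mu> (FF k)" by (rule prop_c)
    also have "\<dots> \<le> \<Phi> * \<mu> (\<Union>l\<in>{k..}. EE l)" using UN_X by (intro cov_meas)
    also have "(\<Union>l\<in>{k..}. EE l) = (\<Union>l\<in>LL \<inter> {k..}. EE l)" using EE_notLL by blast
    also have "\<Phi> * \<mu> (\<Union>l\<in>LL \<inter> {k..}. EE l) \<le> \<Phi> * (\<Sum>l\<in>LL \<inter> {k..}. \<mu> (EE l))"
      using LL_fin EE_X Phi1 by (intro mult_left_mono mu.m_UN) auto
    also have "\<dots> = (\<Sum>l\<in>LL. if l \<in> {k..} then \<Phi> * \<mu> (EE l) else 0)"
      using LL_fin by (simp add: sum_distrib_left sum.inter_restrict if_distrib cong: if_cong)
    also have "\<dots> \<le> \<phi> x" unfolding \<phi>_def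
    proof (intro sum_mono)
      fix l assume "l \<in> LL"
      show "(if l \<in> {k..} then \<Phi> * \<mu> (EE l) else 0) \<le> \<Phi> * \<mu> (EE l) * indicator {0<..<2 powr (real_of_int l + 1)} x"
      proof (cases "k \<le> l")
        case True
        then have "2 powr (real_of_int k + 1) \<le> 2 powr (real_of_int l + 1)" by (intro powr_mono) auto
        then have "x < 2 powr (real_of_int l + 1)" using k by linarith
        then show ?thesis using True x by (simp add: indicator_def)
      next
        case False
        then show ?thesis using Phi1 mu.m_nonneg[OF EE_X[of l]] by (simp add: indicator_def)
      qed
    qed
    finally show ?thesis .
  qed
  have "Wi p (mu.SL f) \<le> Wi p \<phi>" using SL_f_nice wint ppos pt by (intro Wi_mono)
  then show ?thesis using W by simp
qed

definition "D2 = CC / (cc powr p * (1 - 2 powr (- p)))"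

lemma D2_pos: "0 < D2"
proof -
  have "2 powr (- p) < 1" using ppos by (auto simp: powr_less_one)
  then show ?thesis unfolding D2_def using CC_pos cc_pos by simp
qed

lemma lower: "s1 \<le> D2 * Wi p (mu.SL f)"
proof -
  define y where "y k = cc * 2 powr real_of_int k" for k :: int
  have ypos: "0 < y k" for k using cc_pos by (simp add: y_def)
  define \<psi> where "\<psi> x = (\<Sum>k\<in>LL. mu.SL f (y k) * indicator {y k / 2<..<y k} x)" for x
  have wint: "Wint p \<psi>"
    unfolding \<psi>_def using LL_fin ppos ypos by (intro Wint_sum Wint_cmult Wint_ind) (auto simp: less_imp_le)
  have yp: "y k powr p - (y k / 2) powr p = cc powr p * 2 powr (real_of_int k * p) * (1 - 2 powr (- p))" for k
  proof -
    have "y k powr p = cc powr p * 2 powr (real_of_int k * p)"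
      unfolding y_def using cc_pos by (simp add: powr_mult powr_powr)
    moreover have "(y k / 2) powr p = y k powr p * 2 powr (- p)"
      using ypos[of k] by (simp add: powr_divide powr_minus_divide)
    ultimately show ?thesis by (simp add: algebra_simps)
  qed
  have "Wi p \<psi> = (\<Sum>k\<in>LL. mu.SL f (y k) * (y k powr p - (y k / 2) powr p))"
    unfolding \<psi>_def using LL_fin ppos ypos
    by (subst Wi_sum) (auto intro!: sum.cong simp: Wi_ind_c less_imp_le)
  also have "\<dots> = cc powr p * (1 - 2 powr (- p)) * (\<Sum>k\<in>LL. 2 powr (real_of_int k * p) * mu.SL f (y k))"
    unfolding yp sum_distrib_left by (intro sum.cong refl) (simp add: algebra_simps)
  finally have W: "Wi p \<psi> = cc powr p * (1 - 2 powr (- p)) * (\<Sum>k\<in>LL. 2 powr (real_of_int k * p) * mu.SL f (y k))" .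
  have pt: "\<psi> x \<le> mu.SL f x" if x: "0 < x" for x
  proof -
    define J where "J = {k \<in> LL. y k / 2 < x \<and> x < y k}"
    have "\<psi> x = (\<Sum>k\<in>LL. if y k / 2 < x \<and> x < y k then mu.SL f (y k) else 0)"
      unfolding \<psi>_def by (intro sum.cong refl) (simp add: indicator_def)
    also have "\<dots> = (\<Sum>k\<in>J. mu.SL f (y k))"
      unfolding J_def using LL_fin by (simp add: sum.inter_filter)
    finally have psiJ: "\<psi> x = (\<Sum>k\<in>J. mu.SL f (y k))" .
    have uniq: "k1 = k2" if "k1 \<in> J" "k2 \<in> J" for k1 k2
    proof (rule ccontr)
      have lt: False if "k1 \<in> J" "k2 \<in> J" "k1 < k2" for k1 k2
      proof -
        have "2 powr (real_of_int k1 + 1) \<le> 2 powr real_of_int k2"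
          using that(3) by (intro powr_mono) auto
        then have "y k1 \<le> y k2 / 2" unfolding y_def using cc_pos
          by (simp add: powr_add field_simps)
        then show False using that unfolding J_def by auto
      qed
      assume "k1 \<noteq> k2"
      then show False using lt[of k1 k2] lt[of k2 k1] that by (cases "k1 < k2") auto
    qed
    show ?thesis
    proof (cases "J = {}")
      case True
      then show ?thesis using psiJ mu.SL_nonneg[of x f] x by simp
    next
      case False
      then obtain k0 where k0: "k0 \<in> J" by blast
      then have "J = {k0}" using uniq by blast
      then have "\<psi> x = mu.SL f (y k0)" using psiJ by simp
      also have "\<dots> \<le> mu.SL f x" using k0 x unfolding J_def by (intro mu.SL_anti) auto
      finally show ?thesis .
    qed
  qed
  have "s1 \<le> (\<Sum>k\<in>LL. 2 powr (real_of_int k * p) * (CC * mu.SL f (y k)))"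
    unfolding s1_def y_def by (intro sum_mono mult_left_mono prop_d) auto
  also have "\<dots> = D2 * Wi p \<psi>"
  proof -
    have "2 powr (- p) < 1" using ppos by (auto simp: powr_less_one)
    then have e1: "D2 * (cc powr p * (1 - 2 powr (- p))) = CC" unfolding D2_def using cc_pos ppos by simp
    have "D2 * Wi p \<psi> = (D2 * (cc powr p * (1 - 2 powr (- p)))) * (\<Sum>k\<in>LL. 2 powr (real_of_int k * p) * mu.SL f (y k))"
      unfolding W by (simp only: mult.assoc)
    also have "\<dots> = CC * (\<Sum>k\<in>LL. 2 powr (real_of_int k * p) * mu.SL f (y k))" unfolding e1 ..
    finally show ?thesis by (simp add: sum_distrib_left algebra_simps)
  qed
  also have "\<dots> \<le> D2 * Wi p (mu.SL f)"
    using D2_pos wint SL_f_nice ppos pt by (intro mult_left_mono Wi_mono) auto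
  finally show ?thesis .
qed

end


definition "rhof q r = ((2::real) powr (1 / r)) powr q"
definition "CCf q r K = 2 * K * rhof q r * 2 powr q"
definition "ccf q r K = (2 * K * rhof q r) powr (- 1 / q)"
definition "CCpf p q r \<Phi> K = \<Phi> * 2 powr p + (1 / (1 - 2 powr (- p))) * (CCf q r K / (ccf q r K powr p * (1 - 2 powr (- p))))"

context setting begin

lemma rho_eq: "\<rho> = rhof q r" by (simp add: \<rho>_def nu.\<sigma>_def rhof_def)
lemma CC_eq: "CC = CCf q r K" by (simp add: CC_def CCf_def rho_eq)
lemma cc_eq: "cc = ccf q r K" by (simp add: cc_def ccf_def rho_eq)

lemma main:
  "let Lnu = Lout_norm X \<nu> r q (Lr_norm X w r);
            F = (\<lambda>E k. cover_union \<C> (\<Union>l\<in>{k..}. E l))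
        in \<exists>E :: int \<Rightarrow> 'a set.
          (\<forall>k. E k \<subseteq> X) \<and> (\<forall>k l. k \<noteq> l \<longrightarrow> E k \<inter> E l = {}) \<and>
          (\<forall>k. (E k \<noteq> {} \<longrightarrow>
                  loc_size \<mu> q Lnu (restr (X - F E (k + 1)) f) (E k) > ccf q r K * 2 powr real_of_int k)
             \<and> Linf_norm X \<mu> q Lnu (restr (X - F E k) f) \<le> 2 powr real_of_int k
             \<and> super_level X \<mu> q Lnu f (2 powr real_of_int k) \<le> \<mu> (F E k)
             \<and> \<mu> (E k) \<le> CCf q r K * super_level X \<mu> q Lnu f (ccf q r K * 2 powr real_of_int k)) \<and>
          (\<lambda>k. 2 powr (real_of_int k * p) * \<mu> (E k)) summable_on UNIV \<and>
          Lout_norm X \<mu> q p Lnu f powr p / CCpf p q r \<Phi> K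
            \<le> (\<Sum>\<^sub>\<infinity>k. 2 powr (real_of_int k * p) * \<mu> (E k)) \<and>
          (\<Sum>\<^sub>\<infinity>k. 2 powr (real_of_int k * p) * \<mu> (E k))
            \<le> CCpf p q r \<Phi> K * Lout_norm X \<mu> q p Lnu f powr p \<and>
          (\<lambda>k. 2 powr (real_of_int k * p) * (\<Sum>\<^sub>\<infinity>l\<in>{k..}. \<mu> (E l))) summable_on UNIV \<and>
          Lout_norm X \<mu> q p Lnu f powr p / CCpf p q r \<Phi> K
            \<le> (\<Sum>\<^sub>\<infinity>k. 2 powr (real_of_int k * p) * (\<Sum>\<^sub>\<infinity>l\<in>{k..}. \<mu> (E l))) \<and>
          (\<Sum>\<^sub>\<infinity>k. 2 powr (real_of_int k * p) * (\<Sum>\<^sub>\<infinity>l\<in>{k..}. \<mu> (E l)))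
            \<le> CCpf p q r \<Phi> K * Lout_norm X \<mu> q p Lnu f powr p"
proof -
  define I where "I = Wi p (mu.SL f)"
  have LI: "Lout_norm X \<mu> q p N f powr p = I" unfolding I_def by (rule mu.Lout_pow[OF ppos])
  have I0: "0 \<le> I" unfolding I_def using ppos by (rule mu.Wi_SL_nonneg)
  have CCp: "CCpf p q r \<Phi> K = \<Phi> * 2 powr p + GG * D2"
    by (simp add: CCpf_def GG_def D2_def CC_eq cc_eq)
  have up: "I \<le> \<Phi> * 2 powr p * s1" unfolding I_def by (rule upper)
  have lo: "s1 \<le> D2 * I" unfolding I_def by (rule lower)
  have D1p: "0 < \<Phi> * 2 powr p" using Phi1 by simp
  have Cp: "0 < CCpf p q r \<Phi> K" unfolding CCp using D1p GG_ge1 D2_pos by (simp add: add_pos_nonneg)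
  have inf1: "(\<Sum>\<^sub>\<infinity>k. 2 powr (real_of_int k * p) * \<mu> (EE k)) = s1" using hs1 by (rule infsumI)
  have inf2: "(\<Sum>\<^sub>\<infinity>k. 2 powr (real_of_int k * p) * (\<Sum>\<^sub>\<infinity>l\<in>{k..}. \<mu> (EE l))) = GG * s1" using hs2 by (rule infsumI)
  have sm1: "(\<lambda>k. 2 powr (real_of_int k * p) * \<mu> (EE k)) summable_on UNIV"
    using hs1 by (rule has_sum_imp_summable)
  have sm2: "(\<lambda>k. 2 powr (real_of_int k * p) * (\<Sum>\<^sub>\<infinity>l\<in>{k..}. \<mu> (EE l))) summable_on UNIV"
    using hs2 by (rule has_sum_imp_summable)
  have a1: "I \<le> CCpf p q r \<Phi> K * s1"
  proof -
    have "\<Phi> * 2 powr p * s1 \<le> CCpf p q r \<Phi> K * s1"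
      unfolding CCp using s1_nonneg GG_ge1 D2_pos by (intro mult_right_mono) auto
    then show ?thesis using up by simp
  qed
  have a2: "GG * s1 \<le> CCpf p q r \<Phi> K * I"
  proof -
    have "GG * s1 \<le> GG * (D2 * I)" using lo GG_ge1 by (intro mult_left_mono) auto
    also have "\<dots> \<le> CCpf p q r \<Phi> K * I" unfolding CCp using I0 D1p by (simp add: algebra_simps)
    finally show ?thesis .
  qed
  have a3: "s1 \<le> GG * s1" using GG_ge1 s1_nonneg by (simp add: mult_le_cancel_right1)
  show ?thesis unfolding Let_def
  proof (intro exI[of _ EE] conjI allI impI)
    fix k
    show "EE k \<subseteq> X" by (rule EE_X)
    show "ccf q r K * 2 powr real_of_int k < loc_size \<mu> q N (restr (X - BC (\<Union>l\<in>{k+1..}. EE l)) f) (EE k)"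
      if "EE k \<noteq> {}" using prop_a[OF that] by (simp add: cc_eq)
    show "Linf_norm X \<mu> q N (restr (X - BC (\<Union>l\<in>{k..}. EE l)) f) \<le> 2 powr real_of_int k" by (rule prop_b)
    show "super_level X \<mu> q N f (2 powr real_of_int k) \<le> \<mu> (BC (\<Union>l\<in>{k..}. EE l))" by (rule prop_c)
    show "\<mu> (EE k) \<le> CCf q r K * super_level X \<mu> q N f (ccf q r K * 2 powr real_of_int k)"
      using prop_d[of k] by (simp add: cc_eq CC_eq)
  next
    fix k l :: int assume "k \<noteq> l" then show "EE k \<inter> EE l = {}" by (rule EE_disj)
  next
    show "(\<lambda>k. 2 powr (real_of_int k * p) * \<mu> (EE k)) summable_on UNIV" by (rule sm1)
    show "(\<lambda>k. 2 powr (real_of_int k * p) * (\<Sum>\<^sub>\<infinity>l\<in>{k..}. \<mu> (EE l))) summable_on UNIV" by (rule sm2)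
    show "Lout_norm X \<mu> q p N f powr p / CCpf p q r \<Phi> K \<le> (\<Sum>\<^sub>\<infinity>k. 2 powr (real_of_int k * p) * \<mu> (EE k))"
      unfolding LI inf1 using a1 Cp by (simp add: divide_le_eq mult.commute)
    show "(\<Sum>\<^sub>\<infinity>k. 2 powr (real_of_int k * p) * \<mu> (EE k)) \<le> CCpf p q r \<Phi> K * Lout_norm X \<mu> q p N f powr p"
      unfolding LI inf1 using a2 a3 by linarith
    show "Lout_norm X \<mu> q p N f powr p / CCpf p q r \<Phi> K \<le> (\<Sum>\<^sub>\<infinity>k. 2 powr (real_of_int k * p) * (\<Sum>\<^sub>\<infinity>l\<in>{k..}. \<mu> (EE l)))"
    proof -
      have "CCpf p q r \<Phi> K * s1 \<le> CCpf p q r \<Phi> K * (GG * s1)"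
        using a3 Cp by (intro mult_left_mono) auto
      then have "I \<le> CCpf p q r \<Phi> K * (GG * s1)" using a1 by linarith
      then show ?thesis unfolding LI inf2 using Cp by (simp add: divide_le_eq mult.commute)
    qed
    show "(\<Sum>\<^sub>\<infinity>k. 2 powr (real_of_int k * p) * (\<Sum>\<^sub>\<infinity>l\<in>{k..}. \<mu> (EE l))) \<le> CCpf p q r \<Phi> K * Lout_norm X \<mu> q p N f powr p"
      unfolding LI inf2 using a2 by simp
  qed
qed

end

lemma main_global:
  assumes "finite X \<and> outer_measure X \<mu> \<and> outer_measure X \<nu> \<and> (\<forall>x\<in>X. 0 < w x) \<and> canopy X \<mu> \<nu> \<Phi> K \<E> \<C>"
    and "0 < p" "0 < q" "0 < r" "1 \<le> \<Phi>" "1 \<le> K"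
  shows "let Lnu = Lout_norm X \<nu> r q (Lr_norm X w r);
            F = (\<lambda>E k. cover_union \<C> (\<Union>l\<in>{k..}. E l))
        in \<exists>E :: int \<Rightarrow> 'a set.
          (\<forall>k. E k \<subseteq> X) \<and> (\<forall>k l. k \<noteq> l \<longrightarrow> E k \<inter> E l = {}) \<and>
          (\<forall>k. (E k \<noteq> {} \<longrightarrow>
                  loc_size \<mu> q Lnu (restr (X - F E (k + 1)) f) (E k) > ccf q r K * 2 powr real_of_int k)
             \<and> Linf_norm X \<mu> q Lnu (restr (X - F E k) f) \<le> 2 powr real_of_int k
             \<and> super_level X \<mu> q Lnu f (2 powr real_of_int k) \<le> \<mu> (F E k)
             \<and> \<mu> (E k) \<le> CCf q r K * super_level X \<mu> q Lnu f (ccf q r K * 2 powr real_of_int k)) \<and>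
          (\<lambda>k. 2 powr (real_of_int k * p) * \<mu> (E k)) summable_on UNIV \<and>
          Lout_norm X \<mu> q p Lnu f powr p / CCpf p q r \<Phi> K
            \<le> (\<Sum>\<^sub>\<infinity>k. 2 powr (real_of_int k * p) * \<mu> (E k)) \<and>
          (\<Sum>\<^sub>\<infinity>k. 2 powr (real_of_int k * p) * \<mu> (E k))
            \<le> CCpf p q r \<Phi> K * Lout_norm X \<mu> q p Lnu f powr p \<and>
          (\<lambda>k. 2 powr (real_of_int k * p) * (\<Sum>\<^sub>\<infinity>l\<in>{k..}. \<mu> (E l))) summable_on UNIV \<and>
          Lout_norm X \<mu> q p Lnu f powr p / CCpf p q r \<Phi> K
            \<le> (\<Sum>\<^sub>\<infinity>k. 2 powr (real_of_int k * p) * (\<Sum>\<^sub>\<infinity>l\<in>{k..}. \<mu> (E l))) \<and>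
          (\<Sum>\<^sub>\<infinity>k. 2 powr (real_of_int k * p) * (\<Sum>\<^sub>\<infinity>l\<in>{k..}. \<mu> (E l)))
            \<le> CCpf p q r \<Phi> K * Lout_norm X \<mu> q p Lnu f powr p"
proof -
  interpret setting X \<mu> \<nu> w \<E> \<C> f p q r \<Phi> K
    using assms by unfold_locales auto
  show ?thesis by (rule main)
qed

lemma consts_pos:
  assumes "0 < p" "0 < q" "0 < r" "1 \<le> \<Phi>" "1 \<le> K"
  shows "0 < CCf q r K" "0 < ccf q r K" "0 < CCpf p q r \<Phi> K"
proof -
  have rh: "0 < rhof q r" by (simp add: rhof_def)
  show c1: "0 < CCf q r K" using rh assms by (simp add: CCf_def)
  show c2: "0 < ccf q r K" using rh assms by (simp add: ccf_def)
  have z: "2 powr (- p) < 1" using assms by (auto simp: powr_less_one)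
  have "0 \<le> (1 / (1 - 2 powr (- p))) * (CCf q r K / (ccf q r K powr p * (1 - 2 powr (- p))))"
    using z c1 c2 by (intro mult_nonneg_nonneg divide_nonneg_pos) auto
  moreover have "0 < \<Phi> * 2 powr p" using assms by simp
  ultimately show "0 < CCpf p q r \<Phi> K" unfolding CCpf_def by linarith
qed

theorem proposition3p4:
  fixes p q r \<Phi> K :: real
  assumes "0 < p" "0 < q" "0 < r" "1 \<le> \<Phi>" "1 \<le> K"
  shows "\<exists>C c C'. 0 < C \<and> 0 < c \<and> 0 < C' \<and>
    (\<forall>(X :: 'a set) \<mu> \<nu> w \<E> \<C> f.
       finite X \<and> outer_measure X \<mu> \<and> outer_measure X \<nu> \<and> (\<forall>x\<in>X. 0 < w x)
       \<and> canopy X \<mu> \<nu> \<Phi> K \<E> \<C> \<longrightarrow>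
       (let Lnu = Lout_norm X \<nu> r q (Lr_norm X w r);
            F = (\<lambda>E k. cover_union \<C> (\<Union>l\<in>{k..}. E l))
        in \<exists>E :: int \<Rightarrow> 'a set.
          (\<forall>k. E k \<subseteq> X) \<and> (\<forall>k l. k \<noteq> l \<longrightarrow> E k \<inter> E l = {}) \<and>
          (\<forall>k. (E k \<noteq> {} \<longrightarrow>
                  loc_size \<mu> q Lnu (restr (X - F E (k + 1)) f) (E k) > c * 2 powr real_of_int k)
             \<and> Linf_norm X \<mu> q Lnu (restr (X - F E k) f) \<le> 2 powr real_of_int k
             \<and> super_level X \<mu> q Lnu f (2 powr real_of_int k) \<le> \<mu> (F E k)
             \<and> \<mu> (E k) \<le> C * super_level X \<mu> q Lnu f (c * 2 powr real_of_int k)) \<and>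
          (\<lambda>k. 2 powr (real_of_int k * p) * \<mu> (E k)) summable_on UNIV \<and>
          Lout_norm X \<mu> q p Lnu f powr p / C'
            \<le> (\<Sum>\<^sub>\<infinity>k. 2 powr (real_of_int k * p) * \<mu> (E k)) \<and>
          (\<Sum>\<^sub>\<infinity>k. 2 powr (real_of_int k * p) * \<mu> (E k))
            \<le> C' * Lout_norm X \<mu> q p Lnu f powr p \<and>
          (\<lambda>k. 2 powr (real_of_int k * p) * (\<Sum>\<^sub>\<infinity>l\<in>{k..}. \<mu> (E l))) summable_on UNIV \<and>
          Lout_norm X \<mu> q p Lnu f powr p / C'
            \<le> (\<Sum>\<^sub>\<infinity>k. 2 powr (real_of_int k * p) * (\<Sum>\<^sub>\<infinity>l\<in>{k..}. \<mu> (E l))) \<and>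
          (\<Sum>\<^sub>\<infinity>k. 2 powr (real_of_int k * p) * (\<Sum>\<^sub>\<infinity>l\<in>{k..}. \<mu> (E l)))
            \<le> C' * Lout_norm X \<mu> q p Lnu f powr p))"
  apply (rule exI[of _ "CCf q r K"], rule exI[of _ "ccf q r K"], rule exI[of _ "CCpf p q r \<Phi> K"])
  apply (intro conjI allI impI consts_pos[OF assms])
  apply (rule main_global)
  using assms by auto


end
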